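(* Let $\mathcal{S}$ be a circle with one of the projective structures of the context and $\xi\in\mathrm{Vect}(\mathcal{S})$ with flow $\varphi_s$. The infinitesimal Schwarzian $\mathbf{s}(\xi)=\frac{d}{ds}\big|_{s=0}\mathbf{S}(\varphi_s)$ satisfies $\mathbf{s}(\xi)=s_1(\xi)$, where $$\mathbf{s}(\xi)=\lambda\,d\Big(\frac{d\,\mathrm{Div}\,\xi}{\lambda}\Big)\qquad\text{and}\qquad s_1(\xi)=\tfrac32\big(L_\xi\mathrm{g}_1\big)\big|_\Delta .$$
   Context: $\mathcal{S}$ is either (a) $\mathbb{R}/2\pi\mathbb{Z}$ with developing map $\Phi:\mathbb{R}\to\mathbb{R}P^1=\mathbb{R}\cup\{\infty\}$, $\Phi(\theta)=2\tan(\theta/2)$; or (b) $\mathbb{R}P^1=\mathbb{R}/\pi\mathbb{Z}$ with $\Phi(\theta)=\tan\theta$. $\lambda=\Phi^*dt$ ($t$ the affine coordinate of $\mathbb{R}P^1$), $\mathrm{Div}\,\xi=(L_\xi\lambda)/\lambda$. For $\varphi\in\mathrm{Diff}_+(\mathcal{S})$, $\tilde\varphi$ is the diffeomorphism of $\mathbb{R}P^1$ with $\tilde\varphi\circ\Phi=\Phi\circ\varphi$ and $\mathbf{S}(\varphi)=\Phi^*S(\tilde\varphi)$, $S(\tilde\varphi)=\big(\tilde\varphi'''/\tilde\varphi'-\tfrac32(\tilde\varphi''/\tilde\varphi')^2\big)dt^2$. $\mathrm{g}_1$ is the Lorentz metric on $\mathcal{S}\times\mathcal{S}-\Delta$ obtained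 by descending $(\Phi\times\Phi)^*\big(4\,dt_1dt_2/(t_1-t_2)^2\big)$; $L_\xi$ is the Lie derivative along $\xi\oplus\xi$; $L_\xi\mathrm{g}_1$ extends smoothly to the diagonal $\Delta$ and $|_\Delta$ is pullback by $\theta\mapsto(\theta,\theta)$. *)

theory Defs
  imports "HOL-Analysis.Analysis"
begin

text \<open>The two projective circles of the context:
  CircA = R/2piZ with developing map 2 tan(theta/2);
  CircB = RP1 = R/piZ with developing map tan theta.
  Everything is computed on the universal cover R in the coordinate theta.\<close>

datatype proj_circle = CircA | CircB

fun period :: "proj_circle \<Rightarrow> real" where
  "period CircA = 2 * pi"
| "period CircB = pi"

fun Phi :: "proj_circle \<Rightarrow> real \<Rightarrow> real" where
  "Phi CircA \<theta> = 2 * tan (\<theta> / 2)"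
| "Phi CircB \<theta> = tan \<theta>"

fun in_chart :: "proj_circle \<Rightarrow> real \<Rightarrow> bool" where
  "in_chart CircA \<theta> = (cos (\<theta> / 2) \<noteq> 0)"
| "in_chart CircB \<theta> = (cos \<theta> \<noteq> 0)"

fun Psi :: "proj_circle \<Rightarrow> real \<Rightarrow> real" where
  "Psi CircA t = 2 * arctan (t / 2)"
| "Psi CircB t = arctan t"

definition Psi_at :: "proj_circle \<Rightarrow> real \<Rightarrow> real \<Rightarrow> real" where
  "Psi_at S \<theta>0 t = Psi S t + (\<theta>0 - Psi S (Phi S \<theta>0))"

text \<open>Coefficient of lambda = Phi^* dt, i.e. lambda = lam S theta d theta.\<close>
definition lam :: "proj_circle \<Rightarrow> real \<Rightarrow> real" where
  "lam S \<theta> = deriv (Phi S) \<theta>"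

definition schwarzian :: "(real \<Rightarrow> real) \<Rightarrow> real \<Rightarrow> real" where
  "schwarzian g t = (deriv ^^ 3) g t / deriv g t
      - 3 / 2 * ((deriv ^^ 2) g t / deriv g t) ^ 2"

text \<open>For a lift phi of a diffeomorphism of the circle, the induced map tilde-phi of RP1,
  written in the affine chart near Phi theta0: tilde-phi o Phi = Phi o phi.\<close>
definition tilde_map :: "proj_circle \<Rightarrow> (real \<Rightarrow> real) \<Rightarrow> real \<Rightarrow> real \<Rightarrow> real" where
  "tilde_map S \<phi> \<theta>0 t = Phi S (\<phi> (Psi_at S \<theta>0 t))"

text \<open>Coefficient of the quadratic differential bold-S(phi) = Phi^* S(tilde phi) at theta
  (w.r.t. d theta^2), computed in the affine chart.\<close>
definition Sch_coef :: "proj_circle \<Rightarrow> (real \<Rightarrow> real) \<Rightarrow> real \<Rightarrow> real" where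
  "Sch_coef S \<phi> \<theta> = schwarzian (tilde_map S \<phi> \<theta>) (Phi S \<theta>) * (lam S \<theta>) ^ 2"

text \<open>Div xi = (L_xi lambda)/lambda for xi = f d/dtheta.\<close>
definition Div :: "proj_circle \<Rightarrow> (real \<Rightarrow> real) \<Rightarrow> real \<Rightarrow> real" where
  "Div S f \<theta> = (f \<theta> * deriv (lam S) \<theta> + lam S \<theta> * deriv f \<theta>) / lam S \<theta>"

text \<open>Coefficient of lambda d(d Div xi / lambda) w.r.t. d theta^2.\<close>
definition s_formula :: "proj_circle \<Rightarrow> (real \<Rightarrow> real) \<Rightarrow> real \<Rightarrow> real" where
  "s_formula S f \<theta> = lam S \<theta> * deriv (\<lambda>x. deriv (Div S f) x / lam S x) \<theta>"

text \<open>g_1 = G(theta1,theta2) d theta1 d theta2, the pullback of 4 dt1 dt2/(t1-t2)^2.\<close>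
definition G1 :: "proj_circle \<Rightarrow> real \<Rightarrow> real \<Rightarrow> real" where
  "G1 S a b = 4 * lam S a * lam S b / (Phi S a - Phi S b) ^ 2"

text \<open>Coefficient of L_xi g_1 (Lie derivative along xi + xi) w.r.t. d theta1 d theta2.\<close>
definition LG1 :: "proj_circle \<Rightarrow> (real \<Rightarrow> real) \<Rightarrow> real \<times> real \<Rightarrow> real" where
  "LG1 S f p = (case p of (a, b) \<Rightarrow>
      f a * deriv (\<lambda>x. G1 S x b) a + f b * deriv (\<lambda>y. G1 S a y) b
      + G1 S a b * (deriv f a + deriv f b))"

text \<open>Complement of the diagonal of S x S, lifted to R x R.\<close>
definition off_diag :: "proj_circle \<Rightarrow> (real \<times> real) set" where
  "off_diag S = {(a, b). \<forall>k::int. a - b \<noteq> of_int k * period S}"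

definition smooth_vf :: "proj_circle \<Rightarrow> (real \<Rightarrow> real) \<Rightarrow> bool" where
  "smooth_vf S f \<longleftrightarrow> (\<forall>n x. (deriv ^^ n) f differentiable (at x))
      \<and> (\<forall>x. f (x + period S) = f x)"

definition is_flow :: "(real \<Rightarrow> real) \<Rightarrow> (real \<Rightarrow> real \<Rightarrow> real) \<Rightarrow> bool" where
  "is_flow f \<phi> \<longleftrightarrow> (\<forall>\<theta>. \<phi> 0 \<theta> = \<theta>)
      \<and> (\<forall>s \<theta>. ((\<lambda>r. \<phi> r \<theta>) has_real_derivative f (\<phi> s \<theta>)) (at s))"

end

theory Submission
  imports Defs "HOL-Real_Asymp.Real_Asymp"
begin

definition prim :: "(real \<Rightarrow> real) \<Rightarrow> real \<Rightarrow> real" where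
  "prim g r = integral {0..r} g - integral {r..0} g"

lemma prim_0[simp]: "prim g 0 = 0" by (simp add: prim_def)

lemma prim_deriv:
  assumes "continuous_on UNIV g"
  shows "(prim g has_real_derivative g r) (at r)"
proof -
  define a where "a = -\<bar>r\<bar> - 1"
  define b where "b = \<bar>r\<bar> + 1"
  have ab: "a < r" "r < b" "a < 0" "0 < b" by (auto simp: a_def b_def)
  have cont: "continuous_on {a..b} g" using assms continuous_on_subset by blast
  have eq: "prim g u = integral {a..u} g - integral {a..0} g" if "u \<in> {a<..<b}" for u
  proof (cases "0 \<le> u")
    case True
    have "integral {a..0} g + integral {0..u} g = integral {a..u} g"
      apply (rule Henstock_Kurzweil_Integration.integral_combine) using ab True that
      by (auto intro!: integrable_continuous_real continuous_on_subset[OF cont])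
    moreover have "integral {u..0} g = 0" using True by (cases "u=0") auto
    ultimately show ?thesis by (simp add: prim_def)
  next
    case False
    have "integral {a..u} g + integral {u..0} g = integral {a..0} g"
      apply (rule Henstock_Kurzweil_Integration.integral_combine) using ab False that
      by (auto intro!: integrable_continuous_real continuous_on_subset[OF cont])
    moreover have "integral {0..u} g = 0" using False by auto
    ultimately show ?thesis by (simp add: prim_def)
  qed
  have "((\<lambda>u. integral {a..u} g - integral {a..0} g) has_real_derivative g r) (at r within {a..b})"
    using integral_has_real_derivative[OF cont, of r] ab by (auto intro!: derivative_eq_intros)
  then have "((\<lambda>u. integral {a..u} g - integral {a..0} g) has_real_derivative g r) (at r)"
    using ab by (subst (asm) at_within_interior) auto
  then show ?thesis
    by (rule has_field_derivative_transform_within_open[where S="{a<..<b}"]) (use ab eq in auto)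
qed

lemma deriv_cont_on: "(\<And>r. (g has_real_derivative g' r) (at r)) \<Longrightarrow> continuous_on S g"
  by (meson DERIV_isCont continuous_at_imp_continuous_on)

lemma taylor2_bound:
  fixes g g1 g2 :: "real \<Rightarrow> real"
  assumes d1: "\<And>t. (g has_real_derivative g1 t) (at t)"
    and d2: "\<And>t. (g1 has_real_derivative g2 t) (at t)"
    and L: "\<And>t. \<bar>g2 t\<bar> \<le> L"
  shows "\<bar>g b - g a - g1 a * (b - a)\<bar> \<le> L * (b - a)^2"
proof -
  define k where "k t = g t - g a - g1 a * (t - a)" for t
  have dk: "(k has_real_derivative (g1 t - g1 a)) (at t within closed_segment a b)" for t
    unfolding k_def by (rule has_field_derivative_at_within) (auto intro!: derivative_eq_intros d1)
  have lip: "\<bar>g1 t - g1 a\<bar> \<le> L * \<bar>t - a\<bar>" for t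
    using field_differentiable_bound[of UNIV g1 g2 L t a] d2 L by auto
  have "\<bar>g1 t - g1 a\<bar> \<le> L * \<bar>b - a\<bar>" if "t \<in> closed_segment a b" for t
  proof -
    have "\<bar>t - a\<bar> \<le> \<bar>b - a\<bar>" using that
      by (auto simp: closed_segment_eq_real_ivl split: if_splits)
    moreover have "L \<ge> 0" using L[of 0] by linarith
    ultimately show ?thesis using lip[of t] by (meson mult_left_mono order_trans)
  qed
  then have "norm (k b - k a) \<le> (L * \<bar>b - a\<bar>) * norm (b - a)"
    by (intro field_differentiable_bound[where S="closed_segment a b" and f'="\<lambda>t. g1 t - g1 a"])
       (auto intro: dk)
  then show ?thesis by (simp add: k_def power2_eq_square abs_mult mult.assoc)
qed


definition UD :: "(real \<Rightarrow> real \<Rightarrow> real) \<Rightarrow> (real \<Rightarrow> real \<Rightarrow> real) \<Rightarrow> real \<Rightarrow> real \<Rightarrow> bool" where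
  "UD E Ed x T \<longleftrightarrow> (\<forall>e>0. \<exists>d>0. \<forall>h. h \<noteq> 0 \<and> \<bar>h\<bar> < d \<longrightarrow>
      (\<forall>r\<in>{-T..T}. \<bar>E r (x+h) - E r x - h * Ed r x\<bar> \<le> e * \<bar>h\<bar>))"

definition UC :: "(real \<Rightarrow> real \<Rightarrow> real) \<Rightarrow> real \<Rightarrow> real \<Rightarrow> bool" where
  "UC E x T \<longleftrightarrow> (\<forall>e>0. \<exists>d>0. \<forall>h. \<bar>h\<bar> < d \<longrightarrow> (\<forall>r\<in>{-T..T}. \<bar>E r (x+h) - E r x\<bar> \<le> e))"

definition UB :: "(real \<Rightarrow> real \<Rightarrow> real) \<Rightarrow> real \<Rightarrow> real \<Rightarrow> bool" where
  "UB E x T \<longleftrightarrow> (\<exists>B. \<forall>r\<in>{-T..T}. \<bar>E r x\<bar> \<le> B)"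

lemma UB_cont:
  assumes "\<And>r. ((\<lambda>r. E r x) has_real_derivative E' r) (at r)"
  shows "UB E x T"
proof -
  have "continuous_on {-T..T} (\<lambda>r. E r x)" by (rule deriv_cont_on) (rule assms)
  then have "compact ((\<lambda>r. E r x) ` {-T..T})" by (rule compact_continuous_image) auto
  then obtain B where "\<forall>y\<in>(\<lambda>r. E r x) ` {-T..T}. norm y \<le> B"
    using compact_imp_bounded bounded_iff by metis
  then show ?thesis unfolding UB_def by auto
qed

lemma UB_get: "UB E x T \<Longrightarrow> \<exists>B>0. \<forall>r\<in>{-T..T}. \<bar>E r x\<bar> \<le> B"
proof -
  assume "UB E x T"
  then obtain B where "\<forall>r\<in>{-T..T}. \<bar>E r x\<bar> \<le> B" unfolding UB_def by blast
  then show ?thesis by (intro exI[of _ "max B 1"]) force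
qed

lemma UD_deriv:
  assumes "UD E Ed x T" "\<bar>r\<bar> \<le> T"
  shows "(E r has_real_derivative Ed r x) (at x)"
  unfolding DERIV_def LIM_eq
proof (intro allI impI)
  fix e :: real assume e: "e > 0"
  obtain d where d: "d > 0" "\<And>h. h \<noteq> 0 \<and> \<bar>h\<bar> < d \<Longrightarrow>
      \<forall>r\<in>{-T..T}. \<bar>E r (x+h) - E r x - h * Ed r x\<bar> \<le> e/2 * \<bar>h\<bar>"
    using assms(1) e unfolding UD_def by (meson half_gt_zero)
  have "\<bar>(E r (x + h) - E r x) / h - Ed r x\<bar> < e" if "h \<noteq> 0" "\<bar>h\<bar> < d" for h
  proof -
    have "r \<in> {-T..T}" using assms(2) by auto
    then have "\<bar>E r (x+h) - E r x - h * Ed r x\<bar> \<le> e/2 * \<bar>h\<bar>" using d(2)[of h] that by blast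
    moreover have "(E r (x + h) - E r x) / h - Ed r x = (E r (x+h) - E r x - h * Ed r x) / h"
      using that by (simp add: field_simps)
    ultimately have "\<bar>(E r (x + h) - E r x) / h - Ed r x\<bar> \<le> e/2"
      using that by (simp add: abs_divide divide_le_eq)
    then show ?thesis using e by linarith
  qed
  then show "\<exists>s>0. \<forall>h. h \<noteq> 0 \<and> norm (h - 0) < s \<longrightarrow> norm ((E r (x + h) - E r x) / h - Ed r x) < e"
    using d(1) by auto
qed

lemma UD_UC:
  assumes "UD E Ed x T" "UB Ed x T"
  shows "UC E x T"
  unfolding UC_def
proof (intro allI impI)
  fix e :: real assume e: "e > 0"
  obtain B where B: "B > 0" "\<forall>r\<in>{-T..T}. \<bar>Ed r x\<bar> \<le> B" using UB_get[OF assms(2)] by blast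
  obtain d where d: "d > 0" "\<And>h. h \<noteq> 0 \<and> \<bar>h\<bar> < d \<Longrightarrow>
      \<forall>r\<in>{-T..T}. \<bar>E r (x+h) - E r x - h * Ed r x\<bar> \<le> 1 * \<bar>h\<bar>"
    using assms(1) unfolding UD_def by (meson zero_less_one)
  define d' where "d' = min d (e / (B + 1))"
  have "d' > 0" using d B e by (auto simp: d'_def)
  moreover have "\<bar>E r (x+h) - E r x\<bar> \<le> e" if "\<bar>h\<bar> < d'" "r \<in> {-T..T}" for h r
  proof (cases "h = 0")
    case False
    have "\<bar>E r (x+h) - E r x\<bar> \<le> \<bar>E r (x+h) - E r x - h * Ed r x\<bar> + \<bar>h\<bar> * \<bar>Ed r x\<bar>"
      by (simp add: abs_mult[symmetric]) 
    also have "\<dots> \<le> \<bar>h\<bar> + \<bar>h\<bar> * B"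
      using d(2)[of h] False that B(2) by (intro add_mono mult_left_mono) (auto simp: d'_def)
    also have "\<dots> = \<bar>h\<bar> * (B + 1)" by (simp add: algebra_simps)
    also have "\<dots> \<le> e" using that B(1) by (simp add: d'_def less_divide_eq)
    finally show ?thesis .
  qed (use e in auto)
  ultimately show "\<exists>d>0. \<forall>h. \<bar>h\<bar> < d \<longrightarrow> (\<forall>r\<in>{-T..T}. \<bar>E r (x+h) - E r x\<bar> \<le> e)" by blast
qed

lemma UC_bound:
  assumes "UC E x T" "UB E x T"
  shows "\<exists>B>0. \<exists>d>0. \<forall>h. \<bar>h\<bar> < d \<longrightarrow> (\<forall>r\<in>{-T..T}. \<bar>E r (x+h)\<bar> \<le> B)"
proof -
  obtain B where B: "B > 0" "\<forall>r\<in>{-T..T}. \<bar>E r x\<bar> \<le> B" using UB_get[OF assms(2)] by blast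
  obtain d where d: "d > 0" "\<forall>h. \<bar>h\<bar> < d \<longrightarrow> (\<forall>r\<in>{-T..T}. \<bar>E r (x+h) - E r x\<bar> \<le> 1)"
    using assms(1) unfolding UC_def by (meson zero_less_one)
  have "\<forall>h. \<bar>h\<bar> < d \<longrightarrow> (\<forall>r\<in>{-T..T}. \<bar>E r (x+h)\<bar> \<le> B + 1)"
  proof (intro allI impI ballI)
    fix h r assume "\<bar>h\<bar> < d" "r \<in> {-T..T}"
    then have "\<bar>E r (x+h) - E r x\<bar> \<le> 1" "\<bar>E r x\<bar> \<le> B" using d(2) B(2) by auto
    then show "\<bar>E r (x+h)\<bar> \<le> B + 1" by linarith
  qed
  then show ?thesis using B(1) d(1) by (intro exI[of _ "B+1"]) auto
qed


lemma abs_mult_le: "\<bar>a\<bar> \<le> A \<Longrightarrow> \<bar>b\<bar> \<le> B \<Longrightarrow> \<bar>a * (b::real)\<bar> \<le> A * B"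
  by (simp add: abs_mult mult_mono')

lemma UD_E: "UD E Ed x T \<Longrightarrow> 0 < e \<Longrightarrow> \<exists>d>0. \<forall>h. h \<noteq> 0 \<and> \<bar>h\<bar> < d \<longrightarrow>
      (\<forall>r\<in>{-T..T}. \<bar>E r (x+h) - E r x - h * Ed r x\<bar> \<le> e * \<bar>h\<bar>)"
  unfolding UD_def by blast

lemma UC_E: "UC E x T \<Longrightarrow> 0 < e \<Longrightarrow> \<exists>d>0. \<forall>h. \<bar>h\<bar> < d \<longrightarrow> (\<forall>r\<in>{-T..T}. \<bar>E r (x+h) - E r x\<bar> \<le> e)"
  unfolding UC_def by blast

lemma UD_zero: "UD (\<lambda>r y. 0) (\<lambda>r y. 0) x T"
  unfolding UD_def by (auto intro: exI[of _ 1])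

lemma UD_mult:
  assumes E: "UD E Ed x T" and G: "UD G Gd x T"
    and bE: "UB E x T" and bEd: "UB Ed x T" and bG: "UB G x T" and bGd: "UB Gd x T"
  shows "UD (\<lambda>r y. E r y * G r y) (\<lambda>r y. Ed r y * G r y + E r y * Gd r y) x T"
  unfolding UD_def
proof (intro allI impI)
  fix e :: real assume e: "e > 0"
  obtain BE where BE: "BE > 0" "\<forall>r\<in>{-T..T}. \<bar>E r x\<bar> \<le> BE" using UB_get[OF bE] by blast
  obtain BEd where BEd: "BEd > 0" "\<forall>r\<in>{-T..T}. \<bar>Ed r x\<bar> \<le> BEd" using UB_get[OF bEd] by blast
  have uG: "UC G x T" by (rule UD_UC[OF G bGd])
  obtain BG d0 where BG: "BG > 0" "d0 > 0" "\<forall>h. \<bar>h\<bar> < d0 \<longrightarrow> (\<forall>r\<in>{-T..T}. \<bar>G r (x+h)\<bar> \<le> BG)"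
    using UC_bound[OF uG bG] by blast
  have pos29: "0 < e/(3*BG)" using e BG by (auto simp: add_nonneg_pos)
  obtain d1 where d1: "d1 > 0" "\<forall>h. h \<noteq> 0 \<and> \<bar>h\<bar> < d1 \<longrightarrow>
      (\<forall>r\<in>{-T..T}. \<bar>E r (x+h) - E r x - h * Ed r x\<bar> \<le> (e/(3*BG)) * \<bar>h\<bar>)"
    using UD_E[OF E pos29] by blast
  have pos31: "0 < e/(3*BEd)" using e BEd by (auto simp: add_nonneg_pos)
  obtain d2 where d2: "d2 > 0" "\<forall>h. \<bar>h\<bar> < d2 \<longrightarrow> (\<forall>r\<in>{-T..T}. \<bar>G r (x+h) - G r x\<bar> \<le> e/(3*BEd))"
    using UC_E[OF uG pos31] by blast
  have pos34: "0 < e/(3*BE)" using e BE by (auto simp: add_nonneg_pos)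
  obtain d3 where d3: "d3 > 0" "\<forall>h. h \<noteq> 0 \<and> \<bar>h\<bar> < d3 \<longrightarrow>
      (\<forall>r\<in>{-T..T}. \<bar>G r (x+h) - G r x - h * Gd r x\<bar> \<le> (e/(3*BE)) * \<bar>h\<bar>)"
    using UD_E[OF G pos34] by blast
  define d where "d = min d0 (min d1 (min d2 d3))"
  have "d > 0" using BG d1 d2 d3 by (simp add: d_def)
  moreover have "\<bar>E r (x+h) * G r (x+h) - E r x * G r x - h * (Ed r x * G r x + E r x * Gd r x)\<bar> \<le> e * \<bar>h\<bar>"
    if h: "h \<noteq> 0" "\<bar>h\<bar> < d" and r: "r \<in> {-T..T}" for h r
  proof -
    have i1: "\<bar>(E r (x+h) - E r x - h * Ed r x) * G r (x+h)\<bar> \<le> ((e/(3*BG)) * \<bar>h\<bar>) * BG"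
      using d1(2) BG(3) h r by (intro abs_mult_le) (auto simp: d_def)
    have i2: "\<bar>(h * Ed r x) * (G r (x+h) - G r x)\<bar> \<le> (\<bar>h\<bar> * BEd) * (e/(3*BEd))"
      using d2(2) BEd(2) h r by (intro abs_mult_le) (auto simp: d_def abs_mult intro: mult_left_mono)
    have i3: "\<bar>E r x * (G r (x+h) - G r x - h * Gd r x)\<bar> \<le> BE * ((e/(3*BE)) * \<bar>h\<bar>)"
      using d3(2) BE(2) h r by (intro abs_mult_le) (auto simp: d_def)
    have eq: "E r (x+h) * G r (x+h) - E r x * G r x - h * (Ed r x * G r x + E r x * Gd r x)
       = (E r (x+h) - E r x - h * Ed r x) * G r (x+h) + (h * Ed r x) * (G r (x+h) - G r x)
         + E r x * (G r (x+h) - G r x - h * Gd r x)" by (simp add: algebra_simps)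
    have "((e/(3*BG)) * \<bar>h\<bar>) * BG + (\<bar>h\<bar> * BEd) * (e/(3*BEd)) + BE * ((e/(3*BE)) * \<bar>h\<bar>) = e * \<bar>h\<bar>"
      using BG BEd BE by (simp add: field_simps)
    then show ?thesis unfolding eq using i1 i2 i3 by linarith
  qed
  ultimately show "\<exists>d>0. \<forall>h. h \<noteq> 0 \<and> \<bar>h\<bar> < d \<longrightarrow> (\<forall>r\<in>{-T..T}.
     \<bar>E r (x+h) * G r (x+h) - E r x * G r x - h * (Ed r x * G r x + E r x * Gd r x)\<bar> \<le> e * \<bar>h\<bar>)"
    by blast
qed

lemma UD_comp:
  assumes E: "UD E Ed x T" and bEd: "UB Ed x T"
    and g1: "\<And>t. (g has_real_derivative g1 t) (at t)"
    and g2: "\<And>t. (g1 has_real_derivative g2 t) (at t)"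
    and L1: "\<And>t. \<bar>g1 t\<bar> \<le> L1" and L2: "\<And>t. \<bar>g2 t\<bar> \<le> L2"
  shows "UD (\<lambda>r y. g (E r y)) (\<lambda>r y. g1 (E r y) * Ed r y) x T"
  unfolding UD_def
proof (intro allI impI)
  fix e :: real assume e: "e > 0"
  obtain BEd where BEd: "BEd > 0" "\<forall>r\<in>{-T..T}. \<bar>Ed r x\<bar> \<le> BEd" using UB_get[OF bEd] by blast
  have L1p: "L1 \<ge> 0" using L1[of 0] by linarith
  have L2p: "L2 \<ge> 0" using L2[of 0] by linarith
  have pos72: "0 < (1::real)" by simp
  obtain d1 where d1: "d1 > 0" "\<forall>h. h \<noteq> 0 \<and> \<bar>h\<bar> < d1 \<longrightarrow>
      (\<forall>r\<in>{-T..T}. \<bar>E r (x+h) - E r x - h * Ed r x\<bar> \<le> 1 * \<bar>h\<bar>)"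
    using UD_E[OF E pos72] by blast
  have pos75: "0 < e/(2*(L1+1))" using e L1p by (auto simp: add_nonneg_pos)
  obtain d2 where d2: "d2 > 0" "\<forall>h. h \<noteq> 0 \<and> \<bar>h\<bar> < d2 \<longrightarrow>
      (\<forall>r\<in>{-T..T}. \<bar>E r (x+h) - E r x - h * Ed r x\<bar> \<le> (e/(2*(L1+1))) * \<bar>h\<bar>)"
    using UD_E[OF E pos75] by blast
  define K where "K = (L2 + 1) * (1 + BEd)^2"
  have Kp: "K > 0" using BEd L2p by (simp add: K_def)
  define d where "d = min d1 (min d2 (e / (2*K)))"
  have "d > 0" using d1 d2 e Kp by (simp add: d_def)
  moreover have "\<bar>g (E r (x+h)) - g (E r x) - h * (g1 (E r x) * Ed r x)\<bar> \<le> e * \<bar>h\<bar>"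
    if h: "h \<noteq> 0" "\<bar>h\<bar> < d" and r: "r \<in> {-T..T}" for h r
  proof -
    have "\<bar>E r (x+h) - E r x\<bar> \<le> \<bar>E r (x+h) - E r x - h * Ed r x\<bar> + \<bar>h * Ed r x\<bar>" by linarith
    also have "\<dots> \<le> 1 * \<bar>h\<bar> + \<bar>h\<bar> * BEd"
      using d1(2) h r BEd(2) by (intro add_mono) (auto simp: d_def abs_mult intro: mult_left_mono)
    finally have dE: "\<bar>E r (x+h) - E r x\<bar> \<le> \<bar>h\<bar> * (1 + BEd)" by (simp add: algebra_simps)
    have t1: "\<bar>g (E r (x+h)) - g (E r x) - g1 (E r x) * (E r (x+h) - E r x)\<bar> \<le> L2 * (E r (x+h) - E r x)^2"
      by (rule taylor2_bound[OF g1 g2 L2])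
    have "(E r (x+h) - E r x)^2 \<le> (\<bar>h\<bar> * (1 + BEd))^2"
      using dE by (metis abs_ge_zero power2_abs power_mono)
    then have "L2 * (E r (x+h) - E r x)^2 \<le> (L2+1) * (\<bar>h\<bar> * (1 + BEd))^2"
      using L2p by (meson add_increasing2 mult_mono zero_le_one zero_le_power2 less_eq_real_def)
    also have "\<dots> = (K * \<bar>h\<bar>) * \<bar>h\<bar>" by (simp add: K_def power2_eq_square algebra_simps)
    also have "\<dots> \<le> (e/2) * \<bar>h\<bar>"
    proof -
      have "K * \<bar>h\<bar> \<le> K * (e/(2*K))" using h Kp by (intro mult_left_mono) (auto simp: d_def)
      also have "\<dots> = e/2" using Kp by simp
      finally show ?thesis by (intro mult_right_mono) auto
    qed
    finally have t1': "\<bar>g (E r (x+h)) - g (E r x) - g1 (E r x) * (E r (x+h) - E r x)\<bar> \<le> (e/2) * \<bar>h\<bar>"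
      using t1 by linarith
    have t2: "\<bar>g1 (E r x) * (E r (x+h) - E r x - h * Ed r x)\<bar> \<le> (L1+1) * ((e/(2*(L1+1))) * \<bar>h\<bar>)"
      using d2(2) h r L1[of "E r x"] by (intro abs_mult_le) (auto simp: d_def)
    have q: "(L1+1) * ((e/(2*(L1+1))) * \<bar>h\<bar>) = (e/2) * \<bar>h\<bar>" using L1p by (simp add: field_simps)
    have "g (E r (x+h)) - g (E r x) - h * (g1 (E r x) * Ed r x) =
       (g (E r (x+h)) - g (E r x) - g1 (E r x) * (E r (x+h) - E r x)) + g1 (E r x) * (E r (x+h) - E r x - h * Ed r x)"
      by (simp add: algebra_simps)
    then have "\<bar>g (E r (x+h)) - g (E r x) - h * (g1 (E r x) * Ed r x)\<bar> \<le>
       \<bar>g (E r (x+h)) - g (E r x) - g1 (E r x) * (E r (x+h) - E r x)\<bar> + \<bar>g1 (E r x) * (E r (x+h) - E r x - h * Ed r x)\<bar>"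
      by (metis abs_triangle_ineq)
    then show ?thesis using t1' t2 q by linarith
  qed
  ultimately show "\<exists>d>0. \<forall>h. h \<noteq> 0 \<and> \<bar>h\<bar> < d \<longrightarrow> (\<forall>r\<in>{-T..T}.
     \<bar>g (E r (x+h)) - g (E r x) - h * (g1 (E r x) * Ed r x)\<bar> \<le> e * \<bar>h\<bar>)"
    by blast
qed

lemma UC_comp:
  assumes E: "UC E x T" and L: "\<And>a b. \<bar>g a - g b\<bar> \<le> L * \<bar>a - b\<bar>"
  shows "UC (\<lambda>r y. g (E r y)) x T"
  unfolding UC_def
proof (intro allI impI)
  fix e :: real assume e: "e > 0"
  have Lp: "L \<ge> 0" using L[of 1 0] by simp
  have pos127: "0 < e/(L+1)" using e Lp by (auto simp: add_nonneg_pos)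
  obtain d where d: "d > 0" "\<forall>h. \<bar>h\<bar> < d \<longrightarrow> (\<forall>r\<in>{-T..T}. \<bar>E r (x+h) - E r x\<bar> \<le> e/(L+1))"
    using UC_E[OF E pos127] by blast
  have "\<bar>g (E r (x+h)) - g (E r x)\<bar> \<le> e" if "\<bar>h\<bar> < d" "r \<in> {-T..T}" for h r
  proof -
    have "\<bar>g (E r (x+h)) - g (E r x)\<bar> \<le> L * \<bar>E r (x+h) - E r x\<bar>" by (rule L)
    also have "\<dots> \<le> (L+1) * (e/(L+1))" using d(2) that Lp by (intro mult_mono) auto
    also have "\<dots> = e" using Lp by simp
    finally show ?thesis .
  qed
  then show "\<exists>d>0. \<forall>h. \<bar>h\<bar> < d \<longrightarrow> (\<forall>r\<in>{-T..T}. \<bar>g (E r (x+h)) - g (E r x)\<bar> \<le> e)"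
    using d(1) by blast
qed

lemma UC_mult:
  assumes E: "UC E x T" and G: "UC G x T" and bE: "UB E x T" and bG: "UB G x T"
  shows "UC (\<lambda>r y. E r y * G r y) x T"
  unfolding UC_def
proof (intro allI impI)
  fix e :: real assume e: "e > 0"
  obtain BE where BE: "BE > 0" "\<forall>r\<in>{-T..T}. \<bar>E r x\<bar> \<le> BE" using UB_get[OF bE] by blast
  obtain BG d0 where BG: "BG > 0" "d0 > 0" "\<forall>h. \<bar>h\<bar> < d0 \<longrightarrow> (\<forall>r\<in>{-T..T}. \<bar>G r (x+h)\<bar> \<le> BG)"
    using UC_bound[OF G bG] by blast
  have pos149: "0 < e/(2*BG)" using e BG by (auto simp: add_nonneg_pos)
  obtain d1 where d1: "d1 > 0" "\<forall>h. \<bar>h\<bar> < d1 \<longrightarrow> (\<forall>r\<in>{-T..T}. \<bar>E r (x+h) - E r x\<bar> \<le> e/(2*BG))"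
    using UC_E[OF E pos149] by blast
  have pos151: "0 < e/(2*BE)" using e BE by (auto simp: add_nonneg_pos)
  obtain d2 where d2: "d2 > 0" "\<forall>h. \<bar>h\<bar> < d2 \<longrightarrow> (\<forall>r\<in>{-T..T}. \<bar>G r (x+h) - G r x\<bar> \<le> e/(2*BE))"
    using UC_E[OF G pos151] by blast
  define d where "d = min d0 (min d1 d2)"
  have "d > 0" using BG d1 d2 by (simp add: d_def)
  moreover have "\<bar>E r (x+h) * G r (x+h) - E r x * G r x\<bar> \<le> e" if "\<bar>h\<bar> < d" "r \<in> {-T..T}" for h r
  proof -
    have i1: "\<bar>(E r (x+h) - E r x) * G r (x+h)\<bar> \<le> (e/(2*BG)) * BG"
      using d1(2) BG(3) that by (intro abs_mult_le) (auto simp: d_def)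
    have i2: "\<bar>E r x * (G r (x+h) - G r x)\<bar> \<le> BE * (e/(2*BE))"
      using d2(2) BE(2) that by (intro abs_mult_le) (auto simp: d_def)
    have "E r (x+h) * G r (x+h) - E r x * G r x = (E r (x+h) - E r x) * G r (x+h) + E r x * (G r (x+h) - G r x)"
      by (simp add: algebra_simps)
    then have tri: "\<bar>E r (x+h) * G r (x+h) - E r x * G r x\<bar> \<le> \<bar>(E r (x+h) - E r x) * G r (x+h)\<bar> + \<bar>E r x * (G r (x+h) - G r x)\<bar>"
      by (metis abs_triangle_ineq)
    have "(e/(2*BG)) * BG + BE * (e/(2*BE)) = e" using BG BE by (simp add: field_simps)
    then show ?thesis using i1 i2 tri by linarith
  qed
  ultimately show "\<exists>d>0. \<forall>h. \<bar>h\<bar> < d \<longrightarrow> (\<forall>r\<in>{-T..T}. \<bar>E r (x+h) * G r (x+h) - E r x * G r x\<bar> \<le> e)"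
    by blast
qed

lemma UC_int:
  assumes dE: "\<And>r y. ((\<lambda>r. E r y) has_real_derivative Q r y) (at r)"
    and E0: "\<And>y. E 0 y = E 0 x" and Q: "UC Q x T" and T: "T \<ge> 0"
  shows "UC E x T"
  unfolding UC_def
proof (intro allI impI)
  fix e :: real assume e: "e > 0"
  have pos177: "0 < e/(T+1)" using e T by (auto simp: add_nonneg_pos)
  obtain d where d: "d > 0" "\<forall>h. \<bar>h\<bar> < d \<longrightarrow> (\<forall>r\<in>{-T..T}. \<bar>Q r (x+h) - Q r x\<bar> \<le> e/(T+1))"
    using UC_E[OF Q pos177] by blast
  have "\<bar>E r (x+h) - E r x\<bar> \<le> e" if h: "\<bar>h\<bar> < d" and r: "r \<in> {-T..T}" for h r
  proof -
    have dd: "((\<lambda>r. E r (x+h) - E r x) has_real_derivative Q t (x+h) - Q t x) (at t within {-T..T})" for t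
      by (rule has_field_derivative_at_within) (rule DERIV_diff[OF dE dE])
    have bd: "norm (Q t (x+h) - Q t x) \<le> e/(T+1)" if "t \<in> {-T..T}" for t
      using d(2) h that by simp
    have "norm ((E r (x+h) - E r x) - (E 0 (x+h) - E 0 x)) \<le> (e/(T+1)) * norm (r - 0)"
      by (rule field_differentiable_bound[OF convex_real_interval(5) dd bd]) (use r T in auto)
    then have "\<bar>E r (x+h) - E r x\<bar> \<le> (e/(T+1)) * \<bar>r\<bar>" using E0[of "x+h"] by simp
    also have "\<dots> \<le> (e/(T+1)) * (T+1)" using r e T by (intro mult_left_mono) auto
    finally show ?thesis using T by simp
  qed
  then show "\<exists>d>0. \<forall>h. \<bar>h\<bar> < d \<longrightarrow> (\<forall>r\<in>{-T..T}. \<bar>E r (x+h) - E r x\<bar> \<le> e)"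
    using d(1) by blast
qed

lemma exp_lip: fixes a b K :: real shows "\<bar>a\<bar> \<le> K \<Longrightarrow> \<bar>b\<bar> \<le> K \<Longrightarrow> \<bar>exp a - exp b\<bar> \<le> exp K * \<bar>a - b\<bar>"
proof -
  assume "\<bar>a\<bar> \<le> K" "\<bar>b\<bar> \<le> K"
  have dd: "(exp has_real_derivative exp t) (at t within {-K..K})" for t
    by (rule has_field_derivative_at_within) (rule DERIV_exp)
  have bd: "norm (exp t) \<le> exp K" if "t \<in> {-K..K}" for t using that by simp
  have "norm (exp a - exp b) \<le> exp K * norm (a - b)"
    by (rule field_differentiable_bound[OF convex_real_interval(5) dd bd]) (use \<open>\<bar>a\<bar> \<le> K\<close> \<open>\<bar>b\<bar> \<le> K\<close> in auto)
  then show ?thesis by simp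
qed

lemma UC_exp:
  assumes A: "UC A x T" and K: "\<And>r y. r \<in> {-T..T} \<Longrightarrow> \<bar>A r y\<bar> \<le> K"
  shows "UC (\<lambda>r y. exp (A r y)) x T"
  unfolding UC_def
proof (intro allI impI)
  fix e :: real assume e: "e > 0"
  have pos202: "0 < e/exp K" using e by (auto simp: add_nonneg_pos)
  obtain d where d: "d > 0" "\<forall>h. \<bar>h\<bar> < d \<longrightarrow> (\<forall>r\<in>{-T..T}. \<bar>A r (x+h) - A r x\<bar> \<le> e/exp K)"
    using UC_E[OF A pos202] by blast
  have "\<bar>exp (A r (x+h)) - exp (A r x)\<bar> \<le> e" if "\<bar>h\<bar> < d" "r \<in> {-T..T}" for h r
  proof -
    have "\<bar>exp (A r (x+h)) - exp (A r x)\<bar> \<le> exp K * \<bar>A r (x+h) - A r x\<bar>"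
      using K that by (intro exp_lip) auto
    also have "\<dots> \<le> exp K * (e/exp K)" using d(2) that by (intro mult_left_mono) auto
    finally show ?thesis by simp
  qed
  then show "\<exists>d>0. \<forall>h. \<bar>h\<bar> < d \<longrightarrow> (\<forall>r\<in>{-T..T}. \<bar>exp (A r (x+h)) - exp (A r x)\<bar> \<le> e)"
    using d(1) by blast
qed


lemma UB_cont':
  assumes "continuous_on UNIV (\<lambda>r. E r x)"
  shows "UB E x T"
proof -
  have "continuous_on {-T..T} (\<lambda>r. E r x)" using assms continuous_on_subset by blast
  then have "compact ((\<lambda>r. E r x) ` {-T..T})" by (rule compact_continuous_image) auto
  then obtain B where "\<forall>y\<in>(\<lambda>r. E r x) ` {-T..T}. norm y \<le> B"
    using compact_imp_bounded bounded_iff by metis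
  then show ?thesis unfolding UB_def by auto
qed

lemma UD_core:
  fixes E Ed P :: "real \<Rightarrow> real \<Rightarrow> real" and a c W :: "real \<Rightarrow> real"
  assumes dE: "\<And>r y. ((\<lambda>r. E r y) has_real_derivative P r y) (at r)"
    and dEd: "\<And>r. ((\<lambda>r. Ed r x) has_real_derivative (a r * Ed r x + c r)) (at r)"
    and dW: "\<And>r. (W has_real_derivative (a r * W r)) (at r)"
    and Wpos: "\<And>r. W r > 0"
    and init: "\<And>y. E 0 y - E 0 x = (y - x) * Ed 0 x"
    and rem: "\<forall>e>0. \<exists>d>0. \<forall>h. h \<noteq> 0 \<and> \<bar>h\<bar> < d \<longrightarrow> (\<forall>r\<in>{-T..T}.
       \<bar>P r (x+h) - P r x - a r * (E r (x+h) - E r x) - h * c r\<bar> \<le> e * \<bar>h\<bar>)"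
    and T: "T \<ge> 0"
  shows "UD E Ed x T"
proof -
  have cW: "continuous_on {-T..T} W" by (rule deriv_cont_on[OF dW])
  obtain r0 where r0: "r0 \<in> {-T..T}" "\<forall>r\<in>{-T..T}. W r0 \<le> W r"
    using continuous_attains_inf[OF compact_Icc _ cW] T by auto
  define w0 where "w0 = W r0"
  have w0: "w0 > 0" using Wpos by (simp add: w0_def)
  have ubW: "UB (\<lambda>r y. W r) x T" by (rule UB_cont[where E'="\<lambda>r. a r * W r"]) (simp add: dW)
  obtain w1 where w1: "w1 > 0" "\<forall>r\<in>{-T..T}. \<bar>W r\<bar> \<le> w1" using UB_get[OF ubW] by blast
  show ?thesis unfolding UD_def
  proof (intro allI impI)
    fix e :: real assume e: "e > 0"
    define e' where "e' = e * w0 / (w1 * (T+1))"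
    have e': "e' > 0" using e w0 w1 T by (simp add: e'_def)
    obtain d where d: "d > 0" "\<forall>h. h \<noteq> 0 \<and> \<bar>h\<bar> < d \<longrightarrow> (\<forall>r\<in>{-T..T}.
       \<bar>P r (x+h) - P r x - a r * (E r (x+h) - E r x) - h * c r\<bar> \<le> e' * \<bar>h\<bar>)"
      using rem e' by blast
    have "\<bar>E r (x+h) - E r x - h * Ed r x\<bar> \<le> e * \<bar>h\<bar>" if h: "h \<noteq> 0" "\<bar>h\<bar> < d" and r: "r \<in> {-T..T}" for h r
    proof -
      define z where "z t = E t (x+h) - E t x - h * Ed t x" for t
      define R where "R t = P t (x+h) - P t x - a t * (E t (x+h) - E t x) - h * c t" for t
      have dz: "(z has_real_derivative (P t (x+h) - P t x - h * (a t * Ed t x + c t))) (at t)" for t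
        unfolding z_def by (intro DERIV_diff DERIV_cmult dE dEd)
      have dZ: "((\<lambda>t. z t / W t) has_real_derivative R t / W t) (at t)" for t
      proof -
        have "((\<lambda>t. z t / W t) has_real_derivative
            ((P t (x+h) - P t x - h * (a t * Ed t x + c t)) * W t - z t * (a t * W t)) / (W t * W t)) (at t)"
          by (rule DERIV_divide[OF dz dW]) (use Wpos[of t] in auto)
        moreover have "((P t (x+h) - P t x - h * (a t * Ed t x + c t)) * W t - z t * (a t * W t)) / (W t * W t) = R t / W t"
        proof -
          have "(P t (x+h) - P t x - h * (a t * Ed t x + c t)) * W t - z t * (a t * W t) = R t * W t"
            by (simp add: z_def R_def algebra_simps)
          then show ?thesis using Wpos[of t] by simp
        qed
        ultimately show ?thesis by simp
      qed
      have bd: "norm (R t / W t) \<le> e' * \<bar>h\<bar> / w0" if "t \<in> {-T..T}" for t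
      proof -
        have "\<bar>R t\<bar> \<le> e' * \<bar>h\<bar>" using d(2) h that by (simp add: R_def)
        moreover have "w0 \<le> W t" using r0 that by (simp add: w0_def)
        ultimately have "\<bar>R t\<bar> / W t \<le> e' * \<bar>h\<bar> / w0"
          using w0 e' by (intro frac_le) auto
        then show ?thesis using Wpos[of t] by (simp add: abs_divide)
      qed
      have dZ': "((\<lambda>t. z t / W t) has_real_derivative R t / W t) (at t within {-T..T})" for t
        by (rule has_field_derivative_at_within[OF dZ])
      have "norm (z r / W r - z 0 / W 0) \<le> (e' * \<bar>h\<bar> / w0) * norm (r - 0)"
        by (rule field_differentiable_bound[OF convex_real_interval(5) dZ' bd]) (use r T in auto)
      moreover have "z 0 = 0" using init[of "x+h"] by (simp add: z_def)
      ultimately have "\<bar>z r\<bar> / W r \<le> (e' * \<bar>h\<bar> / w0) * \<bar>r\<bar>" using Wpos[of r] by (simp add: abs_divide)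
      then have "\<bar>z r\<bar> \<le> W r * ((e' * \<bar>h\<bar> / w0) * \<bar>r\<bar>)" using Wpos[of r] by (simp add: divide_le_eq mult.commute)
      also have "\<dots> \<le> w1 * ((e' * \<bar>h\<bar> / w0) * (T+1))"
      proof (rule mult_mono)
        show "W r \<le> w1" using w1(2) r by fastforce
        show "(e' * \<bar>h\<bar> / w0) * \<bar>r\<bar> \<le> (e' * \<bar>h\<bar> / w0) * (T+1)"
          using r e' w0 by (intro mult_left_mono) auto
      qed (use w1 e' w0 T in auto)
      also have "\<dots> = e * \<bar>h\<bar> * (w0 * w1 * (T+1)) / (w0 * w1 * (T+1))"
        by (simp add: e'_def)
      also have "\<dots> = e * \<bar>h\<bar>" using w0 w1 T by simp
      finally show ?thesis by (simp add: z_def)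
    qed
    then show "\<exists>d>0. \<forall>h. h \<noteq> 0 \<and> \<bar>h\<bar> < d \<longrightarrow> (\<forall>r\<in>{-T..T}. \<bar>E r (x+h) - E r x - h * Ed r x\<bar> \<le> e * \<bar>h\<bar>)"
      using d(1) by blast
  qed
qed

lemma UD_lin:
  fixes E Ed a b ad bd :: "real \<Rightarrow> real \<Rightarrow> real" and W :: "real \<Rightarrow> real"
  assumes dE: "\<And>r y. ((\<lambda>r. E r y) has_real_derivative a r y * E r y + b r y) (at r)"
    and dEd: "\<And>r. ((\<lambda>r. Ed r x) has_real_derivative a r x * Ed r x + (ad r x * E r x + bd r x)) (at r)"
    and dW: "\<And>r. (W has_real_derivative a r x * W r) (at r)" and Wpos: "\<And>r. W r > 0"
    and E0: "\<And>y. E 0 y = E 0 x" and Ed0: "Ed 0 x = 0"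
    and ua: "UD a ad x T" and ub: "UD b bd x T" and uE: "UC E x T" and bE: "UB E x T" and bad: "UB ad x T"
    and T: "T \<ge> 0"
  shows "UD E Ed x T"
proof (rule UD_core[where E=E and Ed=Ed and x=x and T=T and P="\<lambda>r y. a r y * E r y + b r y" and a="\<lambda>r. a r x"
      and c="\<lambda>r. ad r x * E r x + bd r x" and W=W, OF dE dEd dW Wpos _ _ T])
  show "E 0 y - E 0 x = (y - x) * Ed 0 x" for y using E0[of y] Ed0 by simp
  show "\<forall>e>0. \<exists>d>0. \<forall>h. h \<noteq> 0 \<and> \<bar>h\<bar> < d \<longrightarrow> (\<forall>r\<in>{-T..T}.
       \<bar>a r (x+h) * E r (x+h) + b r (x+h) - (a r x * E r x + b r x) - a r x * (E r (x+h) - E r x)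
         - h * (ad r x * E r x + bd r x)\<bar> \<le> e * \<bar>h\<bar>)"
  proof (intro allI impI)
    fix e :: real assume e: "e > 0"
    obtain BE d0 where BE: "BE > 0" "d0 > 0" "\<forall>h. \<bar>h\<bar> < d0 \<longrightarrow> (\<forall>r\<in>{-T..T}. \<bar>E r (x+h)\<bar> \<le> BE)"
      using UC_bound[OF uE bE] by blast
    obtain Bad where Bad: "Bad > 0" "\<forall>r\<in>{-T..T}. \<bar>ad r x\<bar> \<le> Bad" using UB_get[OF bad] by blast
    have p1: "0 < e/(3*BE)" using e BE by simp
    obtain d1 where d1: "d1 > 0" "\<forall>h. h \<noteq> 0 \<and> \<bar>h\<bar> < d1 \<longrightarrow>
      (\<forall>r\<in>{-T..T}. \<bar>a r (x+h) - a r x - h * ad r x\<bar> \<le> (e/(3*BE)) * \<bar>h\<bar>)"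
      using UD_E[OF ua p1] by blast
    have p2: "0 < e/(3*Bad)" using e Bad by simp
    obtain d2 where d2: "d2 > 0" "\<forall>h. \<bar>h\<bar> < d2 \<longrightarrow> (\<forall>r\<in>{-T..T}. \<bar>E r (x+h) - E r x\<bar> \<le> e/(3*Bad))"
      using UC_E[OF uE p2] by blast
    have p3: "0 < e/3" using e by simp
    obtain d3 where d3: "d3 > 0" "\<forall>h. h \<noteq> 0 \<and> \<bar>h\<bar> < d3 \<longrightarrow>
      (\<forall>r\<in>{-T..T}. \<bar>b r (x+h) - b r x - h * bd r x\<bar> \<le> (e/3) * \<bar>h\<bar>)"
      using UD_E[OF ub p3] by blast
    define d where "d = min d0 (min d1 (min d2 d3))"
    have "d > 0" using BE d1 d2 d3 by (simp add: d_def)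
    moreover have "\<bar>a r (x+h) * E r (x+h) + b r (x+h) - (a r x * E r x + b r x) - a r x * (E r (x+h) - E r x)
         - h * (ad r x * E r x + bd r x)\<bar> \<le> e * \<bar>h\<bar>"
      if h: "h \<noteq> 0" "\<bar>h\<bar> < d" and r: "r \<in> {-T..T}" for h r
    proof -
      have i1: "\<bar>(a r (x+h) - a r x - h * ad r x) * E r (x+h)\<bar> \<le> ((e/(3*BE)) * \<bar>h\<bar>) * BE"
        using d1(2) BE(3) h r by (intro abs_mult_le) (auto simp: d_def)
      have i2: "\<bar>(h * ad r x) * (E r (x+h) - E r x)\<bar> \<le> (\<bar>h\<bar> * Bad) * (e/(3*Bad))"
      proof (rule abs_mult_le)
        show "\<bar>h * ad r x\<bar> \<le> \<bar>h\<bar> * Bad" using Bad(2) r by (simp add: abs_mult mult_left_mono)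
        show "\<bar>E r (x+h) - E r x\<bar> \<le> e/(3*Bad)" using d2(2) h r by (simp add: d_def)
      qed
      have i3: "\<bar>b r (x+h) - b r x - h * bd r x\<bar> \<le> (e/3) * \<bar>h\<bar>"
        using d3(2) h r by (simp add: d_def)
      have eq: "a r (x+h) * E r (x+h) + b r (x+h) - (a r x * E r x + b r x) - a r x * (E r (x+h) - E r x)
         - h * (ad r x * E r x + bd r x) = (a r (x+h) - a r x - h * ad r x) * E r (x+h)
          + (h * ad r x) * (E r (x+h) - E r x) + (b r (x+h) - b r x - h * bd r x)"
        by (simp add: algebra_simps)
      have tri: "\<bar>(a r (x+h) - a r x - h * ad r x) * E r (x+h)
          + (h * ad r x) * (E r (x+h) - E r x) + (b r (x+h) - b r x - h * bd r x)\<bar> \<le>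
          \<bar>(a r (x+h) - a r x - h * ad r x) * E r (x+h)\<bar> + \<bar>(h * ad r x) * (E r (x+h) - E r x)\<bar>
          + \<bar>b r (x+h) - b r x - h * bd r x\<bar>"
        by (rule order_trans[OF abs_triangle_ineq add_mono[OF abs_triangle_ineq order_refl]])
      have "((e/(3*BE)) * \<bar>h\<bar>) * BE + (\<bar>h\<bar> * Bad) * (e/(3*Bad)) + (e/3) * \<bar>h\<bar> = e * \<bar>h\<bar>"
        using BE Bad by (simp add: field_simps)
      then show ?thesis unfolding eq using i1 i2 i3 tri by linarith
    qed
    ultimately show "\<exists>d>0. \<forall>h. h \<noteq> 0 \<and> \<bar>h\<bar> < d \<longrightarrow> (\<forall>r\<in>{-T..T}.
       \<bar>a r (x+h) * E r (x+h) + b r (x+h) - (a r x * E r x + b r x) - a r x * (E r (x+h) - E r x)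
         - h * (ad r x * E r x + bd r x)\<bar> \<le> e * \<bar>h\<bar>)" by blast
  qed
qed


lemma gronwall_sq:
  fixes u u' :: "real \<Rightarrow> real"
  assumes du: "\<And>t. (u has_real_derivative u' t) (at t)" and b: "\<And>t. \<bar>u' t\<bar> \<le> M * \<bar>u t\<bar>" and M: "M \<ge> 0"
  shows "\<bar>u r\<bar> \<le> \<bar>u 0\<bar> * exp (M * \<bar>r\<bar>)"
proof -
  have uu: "u t * u' t \<le> M * (u t * u t)" for t
  proof -
    have "u t * u' t \<le> \<bar>u t\<bar> * \<bar>u' t\<bar>" by (simp add: abs_mult[symmetric])
    also have "\<dots> \<le> \<bar>u t\<bar> * (M * \<bar>u t\<bar>)" by (rule mult_left_mono[OF b]) simp
    also have "\<dots> = M * (u t * u t)" by (simp add: abs_mult[symmetric])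
    finally show ?thesis .
  qed
  have key: "u r * u r \<le> (u 0 * u 0) * exp (2 * M * \<bar>r\<bar>)"
  proof (cases "r \<ge> 0")
    case True
    define w where "w t = u t * u t * exp (-(2*M*t))" for t
    have "w r \<le> w 0"
    proof (rule DERIV_nonpos_imp_nonincreasing[OF True])
      fix t assume "0 \<le> t" "t \<le> r"
      have "(w has_real_derivative (2 * exp (-(2*M*t)) * (u t * u' t - M * (u t * u t)))) (at t)"
        unfolding w_def by (rule DERIV_cong, (rule derivative_eq_intros du refl)+) (simp add: algebra_simps)
      moreover have "2 * exp (-(2*M*t)) * (u t * u' t - M * (u t * u t)) \<le> 0"
        using uu[of t] by (simp add: mult_nonneg_nonpos)
      ultimately show "\<exists>y. (w has_real_derivative y) (at t) \<and> y \<le> 0" by blast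
    qed
    then have "u r * u r * exp (-(2*M*r)) * exp (2*M*r) \<le> u 0 * u 0 * exp (2*M*r)"
      by (simp add: w_def)
    then show ?thesis using True by (simp add: mult.assoc exp_minus field_simps)
  next
    case False
    define w where "w t = u t * u t * exp (2*M*t)" for t
    have "w r \<le> w 0"
    proof (rule DERIV_nonneg_imp_nondecreasing[of r 0 w])
      show "r \<le> 0" using False by simp
      fix t assume "r \<le> t" "t \<le> 0"
      have "(w has_real_derivative (2 * exp (2*M*t) * (u t * u' t + M * (u t * u t)))) (at t)"
        unfolding w_def by (rule DERIV_cong, (rule derivative_eq_intros du refl)+) (simp add: algebra_simps)
      moreover have "2 * exp (2*M*t) * (u t * u' t + M * (u t * u t)) \<ge> 0"
      proof -
        have "- (u t * u' t) \<le> \<bar>u t\<bar> * \<bar>u' t\<bar>" by (simp add: abs_mult[symmetric])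
        also have "\<dots> \<le> \<bar>u t\<bar> * (M * \<bar>u t\<bar>)" by (rule mult_left_mono[OF b]) simp
        also have "\<dots> = M * (u t * u t)" by (simp add: abs_mult[symmetric])
        finally show ?thesis by simp
      qed
      ultimately show "\<exists>y. (w has_real_derivative y) (at t) \<and> y \<ge> 0" by blast
    qed
    then have "u r * u r * exp (2*M*r) * exp (-(2*M*r)) \<le> u 0 * u 0 * exp (-(2*M*r))"
      by (simp add: w_def)
    then show ?thesis using False by (simp add: mult.assoc exp_minus field_simps)
  qed
  have "(u r)^2 \<le> (\<bar>u 0\<bar> * exp (M * \<bar>r\<bar>))^2"
  proof -
    have "(\<bar>u 0\<bar> * exp (M * \<bar>r\<bar>))^2 = (u 0 * u 0) * exp (2 * M * \<bar>r\<bar>)"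
      by (simp add: power2_eq_square exp_add[symmetric] algebra_simps)
    then show ?thesis using key by (simp add: power2_eq_square)
  qed
  then show ?thesis using abs_le_square_iff[of "u r" "\<bar>u 0\<bar> * exp (M * \<bar>r\<bar>)"] by simp
qed


locale flowctx =
  fixes f :: "real \<Rightarrow> real" and \<phi> :: "real \<Rightarrow> real \<Rightarrow> real"
  assumes smooth: "\<And>n x. (deriv ^^ n) f differentiable (at x)"
    and bnd: "\<And>n. \<exists>M. \<forall>z. \<bar>(deriv ^^ n) f z\<bar> \<le> M"
    and fl0: "\<And>y. \<phi> 0 y = y"
    and flD: "\<And>r y. ((\<lambda>r. \<phi> r y) has_real_derivative f (\<phi> r y)) (at r)"
begin

definition Fd :: "nat \<Rightarrow> real \<Rightarrow> real" where "Fd n = (deriv ^^ n) f"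

lemma Fd0: "Fd 0 = f" by (simp add: Fd_def)

lemma Fd_D: "(Fd n has_real_derivative Fd (Suc n) t) (at t)"
  unfolding Fd_def using smooth[of n t] by (simp add: DERIV_deriv_iff_real_differentiable)

lemma Fd_D1: "(Fd 0 has_real_derivative Fd 1 t) (at t)" using Fd_D[of 0] by simp
lemma Fd_D2: "(Fd 1 has_real_derivative Fd 2 t) (at t)" using Fd_D[of 1] by (simp add: numeral_2_eq_2)
lemma Fd_D3: "(Fd 2 has_real_derivative Fd 3 t) (at t)" using Fd_D[of 2] by (simp add: numeral_3_eq_3 numeral_2_eq_2)
lemma Fd_D4: "(Fd 3 has_real_derivative Fd 4 t) (at t)" using Fd_D[of 3] by (simp add: numeral_3_eq_3 eval_nat_numeral)

definition Mb :: "nat \<Rightarrow> real" where "Mb n = (SOME M. \<forall>z. \<bar>Fd n z\<bar> \<le> M)"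

lemma Mb: "\<bar>Fd n z\<bar> \<le> Mb n"
  using someI_ex[OF bnd[of n]] unfolding Mb_def Fd_def by blast

lemma Mb_nonneg: "0 \<le> Mb n" using Mb[of n 0] by linarith

lemma Fd_lip: "\<bar>Fd n a - Fd n b\<bar> \<le> Mb (Suc n) * \<bar>a - b\<bar>"
proof -
  have "norm (Fd n a - Fd n b) \<le> Mb (Suc n) * norm (a - b)"
    by (rule field_differentiable_bound[of UNIV "Fd n" "Fd (Suc n)"])
       (auto intro: has_field_derivative_at_within Fd_D Mb)
  then show ?thesis by simp
qed

lemma Fd_cont: "continuous_on S (Fd n)" by (rule deriv_cont_on[OF Fd_D])

lemma flD0: "((\<lambda>r. \<phi> r y) has_real_derivative Fd 0 (\<phi> r y)) (at r)" using flD by (simp add: Fd0)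

lemma phi_cont: "continuous_on S (\<lambda>r. \<phi> r y)" by (rule deriv_cont_on[OF flD])

lemma Fdphi_cont: "continuous_on S (\<lambda>r. Fd n (\<phi> r y))"
  by (rule continuous_on_compose2[OF Fd_cont phi_cont]) auto

lemma phi_lip: "\<bar>\<phi> r y - \<phi> r x\<bar> \<le> \<bar>y - x\<bar> * exp (Mb 1 * \<bar>r\<bar>)"
proof -
  have "\<bar>(\<lambda>t. \<phi> t y - \<phi> t x) r\<bar> \<le> \<bar>(\<lambda>t. \<phi> t y - \<phi> t x) 0\<bar> * exp (Mb 1 * \<bar>r\<bar>)"
  proof (rule gronwall_sq[where u'="\<lambda>t. Fd 0 (\<phi> t y) - Fd 0 (\<phi> t x)"])
    show "((\<lambda>t. \<phi> t y - \<phi> t x) has_real_derivative Fd 0 (\<phi> t y) - Fd 0 (\<phi> t x)) (at t)" for t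
      by (intro DERIV_diff flD0)
    show "\<bar>Fd 0 (\<phi> t y) - Fd 0 (\<phi> t x)\<bar> \<le> Mb 1 * \<bar>\<phi> t y - \<phi> t x\<bar>" for t
      using Fd_lip[of 0] by simp
  qed (rule Mb_nonneg)
  then show ?thesis by (simp add: fl0)
qed

definition A :: "real \<Rightarrow> real \<Rightarrow> real" where "A r y = prim (\<lambda>\<rho>. Fd 1 (\<phi> \<rho> y)) r"
definition D1 :: "real \<Rightarrow> real \<Rightarrow> real" where "D1 r y = exp (A r y)"
definition B :: "real \<Rightarrow> real \<Rightarrow> real" where "B r y = prim (\<lambda>\<rho>. Fd 2 (\<phi> \<rho> y) * D1 \<rho> y) r"
definition D2 :: "real \<Rightarrow> real \<Rightarrow> real" where "D2 r y = D1 r y * B r y"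
definition C :: "real \<Rightarrow> real \<Rightarrow> real" where
  "C r y = prim (\<lambda>\<rho>. (Fd 3 (\<phi> \<rho> y) * D1 \<rho> y ^ 3 + 3 * Fd 2 (\<phi> \<rho> y) * D1 \<rho> y * D2 \<rho> y) / D1 \<rho> y) r"
definition D3 :: "real \<Rightarrow> real \<Rightarrow> real" where "D3 r y = D1 r y * C r y"

lemma dA: "((\<lambda>r. A r y) has_real_derivative Fd 1 (\<phi> r y)) (at r)"
  unfolding A_def by (rule prim_deriv[OF Fdphi_cont])

lemma dD1: "((\<lambda>r. D1 r y) has_real_derivative Fd 1 (\<phi> r y) * D1 r y) (at r)"
  unfolding D1_def by (rule DERIV_cong[OF DERIV_fun_exp[OF dA]]) simp

lemma D1_pos: "D1 r y > 0" by (simp add: D1_def)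

lemma A0[simp]: "A 0 y = 0" by (simp add: A_def)
lemma D1_0[simp]: "D1 0 y = 1" by (simp add: D1_def)

lemma A_bnd: "\<bar>A r y\<bar> \<le> Mb 1 * \<bar>r\<bar>"
proof -
  have "norm (A r y - A 0 y) \<le> Mb 1 * norm (r - 0)"
  proof -
    have d: "\<And>z. z \<in> UNIV \<Longrightarrow> ((\<lambda>r. A r y) has_real_derivative Fd 1 (\<phi> z y)) (at z within UNIV)"
      using dA by simp
    have b: "\<And>z. z \<in> UNIV \<Longrightarrow> norm (Fd 1 (\<phi> z y)) \<le> Mb 1" using Mb by simp
    show ?thesis by (rule field_differentiable_bound[OF convex_UNIV d b]) auto
  qed
  then show ?thesis by simp
qed

lemma D1_cont: "continuous_on S (\<lambda>r. D1 r y)" by (rule deriv_cont_on[OF dD1])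

lemma dB: "((\<lambda>r. B r y) has_real_derivative Fd 2 (\<phi> r y) * D1 r y) (at r)"
  unfolding B_def by (rule prim_deriv) (intro continuous_intros Fdphi_cont D1_cont)

lemma B0[simp]: "B 0 y = 0" by (simp add: B_def)
lemma D2_0[simp]: "D2 0 y = 0" by (simp add: D2_def)

lemma dD2: "((\<lambda>r. D2 r y) has_real_derivative Fd 1 (\<phi> r y) * D2 r y + Fd 2 (\<phi> r y) * D1 r y * D1 r y) (at r)"
  unfolding D2_def by (rule DERIV_cong[OF DERIV_mult[OF dD1 dB]]) (simp add: algebra_simps)

lemma D2_cont: "continuous_on S (\<lambda>r. D2 r y)" by (rule deriv_cont_on[OF dD2])

lemma dC: "((\<lambda>r. C r y) has_real_derivative
   (Fd 3 (\<phi> r y) * D1 r y ^ 3 + 3 * Fd 2 (\<phi> r y) * D1 r y * D2 r y) / D1 r y) (at r)"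
  unfolding C_def
  by (rule prim_deriv) (intro continuous_intros Fdphi_cont D1_cont D2_cont, simp add: D1_pos[THEN less_imp_neq, symmetric])

lemma C0[simp]: "C 0 y = 0" by (simp add: C_def)
lemma D3_0[simp]: "D3 0 y = 0" by (simp add: D3_def)

lemma dD3: "((\<lambda>r. D3 r y) has_real_derivative Fd 1 (\<phi> r y) * D3 r y +
   (Fd 3 (\<phi> r y) * D1 r y ^ 3 + 3 * Fd 2 (\<phi> r y) * D1 r y * D2 r y)) (at r)"
proof -
  have nz: "D1 r y \<noteq> 0" using D1_pos[of r y] by simp
  show ?thesis unfolding D3_def
    by (rule DERIV_cong[OF DERIV_mult[OF dD1 dC]]) (use nz in \<open>simp add: field_simps\<close>)
qed

end

context flowctx begin

lemma UD1: assumes T: "T \<ge> 0" shows "UD \<phi> D1 x T"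
proof (rule UD_core[where E=\<phi> and Ed=D1 and x=x and T=T and P="\<lambda>r y. Fd 0 (\<phi> r y)"
      and a="\<lambda>r. Fd 1 (\<phi> r x)" and c="\<lambda>r. 0" and W="\<lambda>r. D1 r x"])
  show "((\<lambda>r. \<phi> r y) has_real_derivative Fd 0 (\<phi> r y)) (at r)" for r y by (rule flD0)
  show "((\<lambda>r. D1 r x) has_real_derivative Fd 1 (\<phi> r x) * D1 r x + 0) (at r)" for r
    using dD1 by simp
  show "((\<lambda>r. D1 r x) has_real_derivative Fd 1 (\<phi> r x) * D1 r x) (at r)" for r by (rule dD1)
  show "0 < D1 r x" for r by (rule D1_pos)
  show "\<phi> 0 y - \<phi> 0 x = (y - x) * D1 0 x" for y by (simp add: fl0)
  show "0 \<le> T" by (rule T)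
  show "\<forall>e>0. \<exists>d>0. \<forall>h. h \<noteq> 0 \<and> \<bar>h\<bar> < d \<longrightarrow> (\<forall>r\<in>{-T..T}.
       \<bar>Fd 0 (\<phi> r (x+h)) - Fd 0 (\<phi> r x) - Fd 1 (\<phi> r x) * (\<phi> r (x+h) - \<phi> r x) - h * 0\<bar> \<le> e * \<bar>h\<bar>)"
  proof (intro allI impI)
    fix e :: real assume e: "e > 0"
    define K where "K = Mb 2 * exp (Mb 1 * T)^2"
    have K: "K \<ge> 0" using Mb_nonneg by (simp add: K_def)
    define d where "d = e / (K + 1)"
    have "d > 0" using e K by (simp add: d_def)
    moreover have "\<bar>Fd 0 (\<phi> r (x+h)) - Fd 0 (\<phi> r x) - Fd 1 (\<phi> r x) * (\<phi> r (x+h) - \<phi> r x) - h * 0\<bar> \<le> e * \<bar>h\<bar>"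
      if h: "h \<noteq> 0" "\<bar>h\<bar> < d" and r: "r \<in> {-T..T}" for h r
    proof -
      have t: "\<bar>Fd 0 (\<phi> r (x+h)) - Fd 0 (\<phi> r x) - Fd 1 (\<phi> r x) * (\<phi> r (x+h) - \<phi> r x)\<bar>
          \<le> Mb 2 * (\<phi> r (x+h) - \<phi> r x)^2"
        by (rule taylor2_bound[OF Fd_D1 Fd_D2 Mb])
      have "\<bar>\<phi> r (x+h) - \<phi> r x\<bar> \<le> \<bar>h\<bar> * exp (Mb 1 * \<bar>r\<bar>)" using phi_lip[of r "x+h" x] by simp
      also have "\<dots> \<le> \<bar>h\<bar> * exp (Mb 1 * T)"
        using r Mb_nonneg[of 1] by (intro mult_left_mono) (auto intro: mult_left_mono)
      finally have pl: "\<bar>\<phi> r (x+h) - \<phi> r x\<bar> \<le> \<bar>h\<bar> * exp (Mb 1 * T)" .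
      have "(\<phi> r (x+h) - \<phi> r x)^2 \<le> (\<bar>h\<bar> * exp (Mb 1 * T))^2"
        using pl by (metis abs_ge_zero power2_abs power_mono)
      then have "Mb 2 * (\<phi> r (x+h) - \<phi> r x)^2 \<le> Mb 2 * (\<bar>h\<bar> * exp (Mb 1 * T))^2"
        using Mb_nonneg by (intro mult_left_mono) auto
      also have "\<dots> = (K * \<bar>h\<bar>) * \<bar>h\<bar>" by (simp add: K_def power2_eq_square algebra_simps)
      also have "\<dots> \<le> e * \<bar>h\<bar>"
      proof (rule mult_right_mono)
        have "K * \<bar>h\<bar> \<le> K * d" using h K by (intro mult_left_mono) auto
        also have "\<dots> \<le> e" using K e by (simp add: d_def field_simps)
        finally show "K * \<bar>h\<bar> \<le> e" .
      qed simp
      finally show ?thesis using t by simp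
    qed
    ultimately show "\<exists>d>0. \<forall>h. h \<noteq> 0 \<and> \<bar>h\<bar> < d \<longrightarrow> (\<forall>r\<in>{-T..T}.
       \<bar>Fd 0 (\<phi> r (x+h)) - Fd 0 (\<phi> r x) - Fd 1 (\<phi> r x) * (\<phi> r (x+h) - \<phi> r x) - h * 0\<bar> \<le> e * \<bar>h\<bar>)"
      by blast
  qed
qed

lemma UB_D1: "UB D1 x T" by (rule UB_cont'[OF D1_cont])
lemma UB_D2: "UB D2 x T" by (rule UB_cont'[OF D2_cont])

lemma UC_phi: assumes "T \<ge> 0" shows "UC \<phi> x T" by (rule UD_UC[OF UD1[OF assms] UB_D1])

lemma UC_Fdphi: assumes "T \<ge> 0" shows "UC (\<lambda>r y. Fd n (\<phi> r y)) x T"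
  by (rule UC_comp[OF UC_phi[OF assms] Fd_lip])

lemma UC_D1: assumes T: "T \<ge> 0" shows "UC D1 x T"
proof -
  have uA: "UC A x T" by (rule UC_int[OF dA _ UC_Fdphi[OF T] T]) simp
  have "UC (\<lambda>r y. exp (A r y)) x T"
  proof (rule UC_exp[OF uA])
    fix r y assume "r \<in> {-T..T}"
    then have "\<bar>r\<bar> \<le> T" by auto
    then show "\<bar>A r y\<bar> \<le> Mb 1 * T" using A_bnd[of r y] Mb_nonneg[of 1]
      by (meson mult_left_mono order_trans)
  qed
  moreover have "(\<lambda>r y. exp (A r y)) = D1" by (intro ext) (simp add: D1_def)
  ultimately show ?thesis by simp
qed

lemma UD2: assumes T: "T \<ge> 0" shows "UD D1 D2 x T"
proof (rule UD_lin[where E=D1 and Ed=D2 and x=x and T=T and a="\<lambda>r y. Fd 1 (\<phi> r y)" and b="\<lambda>r y. 0"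
     and ad="\<lambda>r y. Fd 2 (\<phi> r y) * D1 r y" and bd="\<lambda>r y. 0" and W="\<lambda>r. D1 r x"])
  show "((\<lambda>r. D1 r y) has_real_derivative Fd 1 (\<phi> r y) * D1 r y + 0) (at r)" for r y using dD1 by simp
  show "((\<lambda>r. D2 r x) has_real_derivative Fd 1 (\<phi> r x) * D2 r x + (Fd 2 (\<phi> r x) * D1 r x * D1 r x + 0)) (at r)" for r
    using dD2 by simp
  show "((\<lambda>r. D1 r x) has_real_derivative Fd 1 (\<phi> r x) * D1 r x) (at r)" for r by (rule dD1)
  show "0 < D1 r x" for r by (rule D1_pos)
  show "D1 0 y = D1 0 x" for y by simp
  show "D2 0 x = 0" by simp
  show "UD (\<lambda>r y. Fd 1 (\<phi> r y)) (\<lambda>r y. Fd 2 (\<phi> r y) * D1 r y) x T"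
    by (rule UD_comp[OF UD1[OF T] UB_D1 Fd_D2 Fd_D3 Mb Mb])
  show "UD (\<lambda>r y. 0) (\<lambda>r y. 0) x T" by (rule UD_zero)
  show "UC D1 x T" by (rule UC_D1[OF T])
  show "UB D1 x T" by (rule UB_D1)
  show "UB (\<lambda>r y. Fd 2 (\<phi> r y) * D1 r y) x T"
    by (rule UB_cont') (intro continuous_intros Fdphi_cont D1_cont)
  show "0 \<le> T" by (rule T)
qed

lemma UC_D2: assumes T: "T \<ge> 0" shows "UC D2 x T"
proof -
  have uQ: "UC (\<lambda>r y. Fd 2 (\<phi> r y) * D1 r y) x T"
    by (rule UC_mult[OF UC_Fdphi[OF T] UC_D1[OF T] UB_cont' UB_D1]) (rule Fdphi_cont)
  have uB: "UC B x T" by (rule UC_int[OF dB _ uQ T]) simp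
  have bB: "UB B x T" by (rule UB_cont'[OF deriv_cont_on[OF dB]])
  have "UC (\<lambda>r y. D1 r y * B r y) x T" by (rule UC_mult[OF UC_D1[OF T] uB UB_D1 bB])
  moreover have "(\<lambda>r y. D1 r y * B r y) = D2" by (intro ext) (simp add: D2_def)
  ultimately show ?thesis by simp
qed

lemma UD3: assumes T: "T \<ge> 0" shows "UD D2 D3 x T"
proof (rule UD_lin[where E=D2 and Ed=D3 and x=x and T=T and a="\<lambda>r y. Fd 1 (\<phi> r y)"
     and b="\<lambda>r y. Fd 2 (\<phi> r y) * (D1 r y * D1 r y)"
     and ad="\<lambda>r y. Fd 2 (\<phi> r y) * D1 r y"
     and bd="\<lambda>r y. Fd 3 (\<phi> r y) * D1 r y * (D1 r y * D1 r y) + Fd 2 (\<phi> r y) * (D2 r y * D1 r y + D1 r y * D2 r y)"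
     and W="\<lambda>r. D1 r x"])
  show "((\<lambda>r. D2 r y) has_real_derivative Fd 1 (\<phi> r y) * D2 r y + Fd 2 (\<phi> r y) * (D1 r y * D1 r y)) (at r)" for r y
    using dD2 by (simp add: mult.assoc)
  show "((\<lambda>r. D3 r x) has_real_derivative Fd 1 (\<phi> r x) * D3 r x +
     (Fd 2 (\<phi> r x) * D1 r x * D2 r x + (Fd 3 (\<phi> r x) * D1 r x * (D1 r x * D1 r x) +
      Fd 2 (\<phi> r x) * (D2 r x * D1 r x + D1 r x * D2 r x)))) (at r)" for r
    by (rule DERIV_cong[OF dD3]) (simp add: algebra_simps power3_eq_cube)
  show "((\<lambda>r. D1 r x) has_real_derivative Fd 1 (\<phi> r x) * D1 r x) (at r)" for r by (rule dD1)
  show "0 < D1 r x" for r by (rule D1_pos)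
  show "D2 0 y = D2 0 x" for y by simp
  show "D3 0 x = 0" by simp
  show "UD (\<lambda>r y. Fd 1 (\<phi> r y)) (\<lambda>r y. Fd 2 (\<phi> r y) * D1 r y) x T"
    by (rule UD_comp[OF UD1[OF T] UB_D1 Fd_D2 Fd_D3 Mb Mb])
  have u1: "UD (\<lambda>r y. Fd 2 (\<phi> r y)) (\<lambda>r y. Fd 3 (\<phi> r y) * D1 r y) x T"
    by (rule UD_comp[OF UD1[OF T] UB_D1 Fd_D3 Fd_D4 Mb Mb])
  have u2: "UD (\<lambda>r y. D1 r y * D1 r y) (\<lambda>r y. D2 r y * D1 r y + D1 r y * D2 r y) x T"
    by (rule UD_mult[OF UD2[OF T] UD2[OF T] UB_D1 UB_D2 UB_D1 UB_D2])
  show "UD (\<lambda>r y. Fd 2 (\<phi> r y) * (D1 r y * D1 r y))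
     (\<lambda>r y. Fd 3 (\<phi> r y) * D1 r y * (D1 r y * D1 r y) + Fd 2 (\<phi> r y) * (D2 r y * D1 r y + D1 r y * D2 r y)) x T"
  proof (rule UD_mult[OF u1 u2])
    show "UB (\<lambda>r y. Fd 2 (\<phi> r y)) x T" by (rule UB_cont'[OF Fdphi_cont])
    show "UB (\<lambda>r y. Fd 3 (\<phi> r y) * D1 r y) x T"
      by (rule UB_cont') (intro continuous_intros Fdphi_cont D1_cont)
    show "UB (\<lambda>r y. D1 r y * D1 r y) x T"
      by (rule UB_cont') (intro continuous_intros D1_cont)
    show "UB (\<lambda>r y. D2 r y * D1 r y + D1 r y * D2 r y) x T"
      by (rule UB_cont') (intro continuous_intros D1_cont D2_cont)
  qed
  show "UC D2 x T" by (rule UC_D2[OF T])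
  show "UB D2 x T" by (rule UB_D2)
  show "UB (\<lambda>r y. Fd 2 (\<phi> r y) * D1 r y) x T"
    by (rule UB_cont') (intro continuous_intros Fdphi_cont D1_cont)
  show "0 \<le> T" by (rule T)
qed

lemma flow_derivs:
  "(\<phi> s has_real_derivative D1 s x) (at x)"
  "(D1 s has_real_derivative D2 s x) (at x)"
  "(D2 s has_real_derivative D3 s x) (at x)"
  by (rule UD_deriv[OF UD1[of "\<bar>s\<bar>"]], simp, simp)
     (rule UD_deriv[OF UD2[of "\<bar>s\<bar>"]], simp, simp,
      rule UD_deriv[OF UD3[of "\<bar>s\<bar>"]], simp, simp)

end

lemma lim_gam: "((\<lambda>u::real. 1 / (sin u)^2 - 1 / u^2) \<longlongrightarrow> 1/3) (at 0)"
  by real_asymp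

lemma lim_gam1: "((\<lambda>u::real. - 2 * cos u / (sin u)^3 + 2 / u^3) \<longlongrightarrow> 0) (at 0)"
  by real_asymp


definition Gam :: "real \<Rightarrow> real \<Rightarrow> real" where "Gam k z = 4 / (k^2 * sin (z/k)^2)"
definition Gam1 :: "real \<Rightarrow> real \<Rightarrow> real" where "Gam1 k z = - 8 * cos (z/k) / (k^3 * sin (z/k)^3)"

lemma Gam_deriv:
  assumes k: "k \<noteq> 0" and s: "sin (z/k) \<noteq> 0"
  shows "(Gam k has_real_derivative Gam1 k z) (at z)"
proof -
  have ds: "((\<lambda>z. sin (z/k)) has_real_derivative cos (z/k) * (1/k)) (at z)"
    by (rule DERIV_fun_sin[OF DERIV_cdivide[OF DERIV_ident]])
  have dd: "((\<lambda>z. k^2 * (sin (z/k) * sin (z/k))) has_real_derivative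
      k^2 * (cos (z/k) * (1/k) * sin (z/k) + cos (z/k) * (1/k) * sin (z/k))) (at z)"
    by (rule DERIV_cmult[OF DERIV_mult[OF ds ds]])
  have "((\<lambda>z. 4 / (k^2 * (sin (z/k) * sin (z/k)))) has_real_derivative
      (0 * (k^2 * (sin (z/k) * sin (z/k))) - 4 * (k^2 * (cos (z/k) * (1/k) * sin (z/k) + cos (z/k) * (1/k) * sin (z/k))))
        / ((k^2 * (sin (z/k) * sin (z/k))) * (k^2 * (sin (z/k) * sin (z/k))))) (at z)"
    by (rule DERIV_divide[OF DERIV_const dd]) (use k s in simp)
  moreover have "(0 * (k^2 * (sin (z/k) * sin (z/k))) - 4 * (k^2 * (cos (z/k) * (1/k) * sin (z/k) + cos (z/k) * (1/k) * sin (z/k))))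
        / ((k^2 * (sin (z/k) * sin (z/k))) * (k^2 * (sin (z/k) * sin (z/k)))) = Gam1 k z"
    using k s by (simp add: Gam1_def field_simps power2_eq_square power3_eq_cube)
  moreover have "Gam k = (\<lambda>z. 4 / (k^2 * (sin (z/k) * sin (z/k))))"
    by (intro ext) (simp add: Gam_def power2_eq_square)
  ultimately show ?thesis by simp
qed

lemma lim_scale: assumes k: "k > 0" shows "filterlim (\<lambda>z::real. z / k) (at 0) (at 0)"
proof (rule filterlim_atI)
  show "((\<lambda>z. z / k) \<longlongrightarrow> 0) (at 0)" by (rule tendsto_divide_zero[OF tendsto_ident_at])
  show "\<forall>\<^sub>F z in at 0. z / k \<noteq> 0" using k by (simp add: eventually_at_filter)
qed

lemma lim_Gam: assumes k: "k > 0" shows "((\<lambda>z. Gam k z - 4 / z^2) \<longlongrightarrow> 4 / (3 * k^2)) (at 0)"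
proof -
  have "((\<lambda>z. (4/k^2) * (1 / (sin (z/k))^2 - 1 / (z/k)^2)) \<longlongrightarrow> (4/k^2) * (1/3)) (at 0)"
    by (intro tendsto_mult_left filterlim_compose[OF lim_gam lim_scale[OF k]])
  moreover have "(4/k^2) * (1 / (sin (z/k))^2 - 1 / (z/k)^2) = Gam k z - 4 / z^2" for z
    using k by (simp add: Gam_def field_simps)
  ultimately show ?thesis by (simp add: mult.commute)
qed

lemma lim_Gam1: assumes k: "k > 0" shows "((\<lambda>z. Gam1 k z + 8 / z^3) \<longlongrightarrow> 0) (at 0)"
proof -
  have "((\<lambda>z. (4/k^3) * (- 2 * cos (z/k) / (sin (z/k))^3 + 2 / (z/k)^3)) \<longlongrightarrow> (4/k^3) * 0) (at 0)"
    by (intro tendsto_mult_left filterlim_compose[OF lim_gam1 lim_scale[OF k]])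
  moreover have "(4/k^3) * (- 2 * cos (z/k) / (sin (z/k))^3 + 2 / (z/k)^3) = Gam1 k z + 8 / z^3" for z
    using k by (simp add: Gam1_def field_simps)
  ultimately show ?thesis by simp
qed

lemma taylor_alg:
  fixes z F1 F2 F3 G :: real
  assumes "z \<noteq> 0"
  shows "- 8 * (F1 * z + F2 / 2 * z^2 + F3 / 6 * z^3) / z^3 + 4 * (F1 + F2 * z + G / 2 * z^2 + F1) / z^2
     = - (4/3) * F3 + 2 * G"
proof -
  have "- 8 * (F1 * z + F2 / 2 * z^2 + F3 / 6 * z^3) / z^3 = - 8 * F1 / z^2 - 4 * F2 / z - (4/3) * F3"
    using assms by (simp add: field_simps power2_eq_square power3_eq_cube)
  moreover have "4 * (F1 + F2 * z + G / 2 * z^2 + F1) / z^2 = 8 * F1 / z^2 + 4 * F2 / z + 2 * G"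
    using assms by (simp add: field_simps power2_eq_square power3_eq_cube)
  ultimately show ?thesis by simp
qed

lemma taylor_M:
  fixes Fd :: "nat \<Rightarrow> real \<Rightarrow> real"
  assumes F: "\<And>n x. (Fd n has_real_derivative Fd (Suc n) x) (at x)" and ab: "a \<noteq> b"
  shows "\<exists>\<xi> \<eta>. \<bar>\<xi> - b\<bar> \<le> \<bar>a - b\<bar> \<and> \<bar>\<eta> - b\<bar> \<le> \<bar>a - b\<bar> \<and>
     - 8 * (Fd 0 a - Fd 0 b) / (a - b)^3 + 4 * (Fd 1 a + Fd 1 b) / (a - b)^2 = - (4/3) * Fd 3 \<xi> + 2 * Fd 3 \<eta>"
proof -
  obtain t where t: "(if a < b then a < t \<and> t < b else b < t \<and> t < a)"
    "Fd 0 a = (\<Sum>m<3. (Fd m b / fact m) * (a - b)^m) + (Fd 3 t / fact 3) * (a - b)^3"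
    using Taylor[of 3 Fd "Fd 0" "min a b" "max a b" b a] F ab by auto
  obtain t' where t': "(if a < b then a < t' \<and> t' < b else b < t' \<and> t' < a)"
    "Fd 1 a = (\<Sum>m<2. (Fd (Suc m) b / fact m) * (a - b)^m) + (Fd (Suc 2) t' / fact 2) * (a - b)^2"
    using Taylor[of 2 "\<lambda>m. Fd (Suc m)" "Fd 1" "min a b" "max a b" b a] F ab by auto
  have e1: "Fd 0 a = Fd 0 b + Fd 1 b * (a - b) + Fd 2 b / 2 * (a - b)^2 + Fd 3 t / 6 * (a - b)^3"
    using t(2) by (simp add: eval_nat_numeral fact_numeral)
  have e2: "Fd 1 a = Fd 1 b + Fd 2 b * (a - b) + Fd 3 t' / 2 * (a - b)^2"
    using t'(2) by (simp add: eval_nat_numeral fact_numeral)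
  have z: "a - b \<noteq> 0" using ab by simp
  have "- 8 * (Fd 0 a - Fd 0 b) / (a - b)^3 + 4 * (Fd 1 a + Fd 1 b) / (a - b)^2 = - (4/3) * Fd 3 t + 2 * Fd 3 t'"
  proof -
    have "Fd 0 a - Fd 0 b = Fd 1 b * (a - b) + Fd 2 b / 2 * (a - b)^2 + Fd 3 t / 6 * (a - b)^3" using e1 by simp
    moreover have "Fd 1 a + Fd 1 b = Fd 1 b + Fd 2 b * (a - b) + Fd 3 t' / 2 * (a - b)^2 + Fd 1 b" using e2 by simp
    ultimately show ?thesis using taylor_alg[OF z, of "Fd 1 b" "Fd 2 b" "Fd 3 t" "Fd 3 t'"] by simp
  qed
  moreover have "\<bar>t - b\<bar> \<le> \<bar>a - b\<bar>" "\<bar>t' - b\<bar> \<le> \<bar>a - b\<bar>" using t(1) t'(1) by (auto split: if_splits)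
  ultimately show ?thesis by blast
qed


lemma part2_lim:
  fixes Fd :: "nat \<Rightarrow> real \<Rightarrow> real" and k \<theta> :: real
  assumes F: "\<And>n x. (Fd n has_real_derivative Fd (Suc n) x) (at x)" and k: "k > 0"
  shows "((\<lambda>p. (Fd 0 (fst p) - Fd 0 (snd p)) * Gam1 k (fst p - snd p)
      + Gam k (fst p - snd p) * (Fd 1 (fst p) + Fd 1 (snd p)))
     \<longlongrightarrow> 2/3 * Fd 3 \<theta> + 8 / (3 * k^2) * Fd 1 \<theta>) (at (\<theta>, \<theta>) within {p. fst p \<noteq> snd p})"
proof -
  define Fl where "Fl = at (\<theta>, \<theta>) within {p::real\<times>real. fst p \<noteq> snd p}"
  have cF: "isCont (Fd n) x" for n x by (rule DERIV_isCont[OF F])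
  have fstT: "((\<lambda>p. fst p) \<longlongrightarrow> \<theta>) Fl"
    unfolding Fl_def using tendsto_fst[OF tendsto_ident_at[of "(\<theta>,\<theta>)"]] by simp
  have sndT: "((\<lambda>p. snd p) \<longlongrightarrow> \<theta>) Fl"
    unfolding Fl_def using tendsto_snd[OF tendsto_ident_at[of "(\<theta>,\<theta>)"]] by simp
  have zT: "((\<lambda>p. fst p - snd p) \<longlongrightarrow> 0) Fl" using tendsto_diff[OF fstT sndT] by simp
  have ne: "\<forall>\<^sub>F p in Fl. fst p \<noteq> snd p" unfolding Fl_def by (simp add: eventually_at_filter)
  have zA: "filterlim (\<lambda>p. fst p - snd p) (at 0) Fl"
    by (rule filterlim_atI[OF zT]) (use ne in \<open>auto elim: eventually_mono\<close>)
  have L1: "((\<lambda>p. Gam k (fst p - snd p) - 4 / (fst p - snd p)^2) \<longlongrightarrow> 4 / (3 * k^2)) Fl"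
    using filterlim_compose[OF lim_Gam[OF k] zA] by (simp add: o_def)
  have L2: "((\<lambda>p. Gam1 k (fst p - snd p) + 8 / (fst p - snd p)^3) \<longlongrightarrow> 0) Fl"
    using filterlim_compose[OF lim_Gam1[OF k] zA] by (simp add: o_def)
  have D0: "((\<lambda>p. Fd 0 (fst p) - Fd 0 (snd p)) \<longlongrightarrow> Fd 0 \<theta> - Fd 0 \<theta>) Fl"
    by (intro tendsto_diff isCont_tendsto_compose[OF cF] fstT sndT)
  have S1: "((\<lambda>p. Fd 1 (fst p) + Fd 1 (snd p)) \<longlongrightarrow> Fd 1 \<theta> + Fd 1 \<theta>) Fl"
    by (intro tendsto_add isCont_tendsto_compose[OF cF] fstT sndT)
  define M where "M p = - 8 * (Fd 0 (fst p) - Fd 0 (snd p)) / (fst p - snd p)^3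
      + 4 * (Fd 1 (fst p) + Fd 1 (snd p)) / (fst p - snd p)^2" for p
  define XE where "XE p = (SOME q. \<bar>fst q - snd p\<bar> \<le> \<bar>fst p - snd p\<bar> \<and> \<bar>snd q - snd p\<bar> \<le> \<bar>fst p - snd p\<bar> \<and>
      M p = - (4/3) * Fd 3 (fst q) + 2 * Fd 3 (snd q))" for p
  have XE: "\<bar>fst (XE p) - snd p\<bar> \<le> \<bar>fst p - snd p\<bar> \<and> \<bar>snd (XE p) - snd p\<bar> \<le> \<bar>fst p - snd p\<bar> \<and>
      M p = - (4/3) * Fd 3 (fst (XE p)) + 2 * Fd 3 (snd (XE p))" if nep: "fst p \<noteq> snd p" for p
  proof -
    obtain \<xi> \<eta> where "\<bar>\<xi> - snd p\<bar> \<le> \<bar>fst p - snd p\<bar> \<and> \<bar>\<eta> - snd p\<bar> \<le> \<bar>fst p - snd p\<bar> \<and>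
     M p = - (4/3) * Fd 3 \<xi> + 2 * Fd 3 \<eta>"
      using taylor_M[of Fd "fst p" "snd p", OF F nep] unfolding M_def by blast
    then have "\<exists>q. \<bar>fst q - snd p\<bar> \<le> \<bar>fst p - snd p\<bar> \<and> \<bar>snd q - snd p\<bar> \<le> \<bar>fst p - snd p\<bar> \<and>
      M p = - (4/3) * Fd 3 (fst q) + 2 * Fd 3 (snd q)" by (intro exI[of _ "(\<xi>, \<eta>)"]) simp
    then show ?thesis unfolding XE_def by (rule someI_ex)
  qed
  have bndT: "((\<lambda>p. \<bar>fst p - snd p\<bar> + \<bar>snd p - \<theta>\<bar>) \<longlongrightarrow> 0) Fl"
  proof -
    have "((\<lambda>p. \<bar>fst p - snd p\<bar> + \<bar>snd p - \<theta>\<bar>) \<longlongrightarrow> \<bar>0\<bar> + \<bar>\<theta> - \<theta>\<bar>) Fl"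
      by (intro tendsto_add tendsto_rabs zT tendsto_diff sndT tendsto_const)
    then show ?thesis by simp
  qed
  have conv: "((\<lambda>p. g (XE p)) \<longlongrightarrow> \<theta>) Fl"
    if g: "\<And>p. fst p \<noteq> snd p \<Longrightarrow> \<bar>g (XE p) - snd p\<bar> \<le> \<bar>fst p - snd p\<bar>" for g
  proof -
    have "((\<lambda>p. g (XE p) - \<theta>) \<longlongrightarrow> 0) Fl"
    proof (rule Lim_null_comparison[OF _ bndT])
      show "\<forall>\<^sub>F p in Fl. norm (g (XE p) - \<theta>) \<le> \<bar>fst p - snd p\<bar> + \<bar>snd p - \<theta>\<bar>"
        using ne by eventually_elim (use g in \<open>fastforce\<close>)
    qed
    then show ?thesis by (simp add: LIM_zero_iff)
  qed
  have xiT: "((\<lambda>p. fst (XE p)) \<longlongrightarrow> \<theta>) Fl" by (rule conv) (use XE in blast)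
  have etaT: "((\<lambda>p. snd (XE p)) \<longlongrightarrow> \<theta>) Fl" by (rule conv) (use XE in blast)
  have MT0: "((\<lambda>p. - (4/3) * Fd 3 (fst (XE p)) + 2 * Fd 3 (snd (XE p))) \<longlongrightarrow> - (4/3) * Fd 3 \<theta> + 2 * Fd 3 \<theta>) Fl"
    by (intro tendsto_add tendsto_mult_left isCont_tendsto_compose[OF cF] xiT etaT)
  have MT: "(M \<longlongrightarrow> 2/3 * Fd 3 \<theta>) Fl"
  proof -
    have "(M \<longlongrightarrow> - (4/3) * Fd 3 \<theta> + 2 * Fd 3 \<theta>) Fl"
      by (rule Lim_transform_eventually[OF MT0]) (use ne XE in \<open>auto elim: eventually_mono\<close>)
    then show ?thesis by simp
  qed
  have eq: "(Fd 0 (fst p) - Fd 0 (snd p)) * Gam1 k (fst p - snd p) + Gam k (fst p - snd p) * (Fd 1 (fst p) + Fd 1 (snd p))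
     = M p + (Fd 0 (fst p) - Fd 0 (snd p)) * (Gam1 k (fst p - snd p) + 8 / (fst p - snd p)^3)
       + (Gam k (fst p - snd p) - 4 / (fst p - snd p)^2) * (Fd 1 (fst p) + Fd 1 (snd p))" for p
    unfolding M_def by (simp add: algebra_simps) (simp add: add_divide_distrib[symmetric])
  have "((\<lambda>p. M p + (Fd 0 (fst p) - Fd 0 (snd p)) * (Gam1 k (fst p - snd p) + 8 / (fst p - snd p)^3)
       + (Gam k (fst p - snd p) - 4 / (fst p - snd p)^2) * (Fd 1 (fst p) + Fd 1 (snd p)))
     \<longlongrightarrow> 2/3 * Fd 3 \<theta> + (Fd 0 \<theta> - Fd 0 \<theta>) * 0 + 4 / (3 * k^2) * (Fd 1 \<theta> + Fd 1 \<theta>)) Fl"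
    by (intro tendsto_add tendsto_mult MT D0 L2 L1 S1)
  moreover have "2/3 * Fd 3 \<theta> + (Fd 0 \<theta> - Fd 0 \<theta>) * 0 + 4 / (3 * k^2) * (Fd 1 \<theta> + Fd 1 \<theta>)
     = 2/3 * Fd 3 \<theta> + 8 / (3 * k^2) * Fd 1 \<theta>" by (simp add: field_simps)
  ultimately show ?thesis unfolding Fl_def eq by simp
qed


definition C3on :: "(real \<Rightarrow> real) \<Rightarrow> (real \<Rightarrow> real) \<Rightarrow> (real \<Rightarrow> real) \<Rightarrow> (real \<Rightarrow> real) \<Rightarrow> real set \<Rightarrow> bool" where
  "C3on g g1 g2 g3 U \<longleftrightarrow> open U \<and> (\<forall>t\<in>U. (g has_real_derivative g1 t) (at t) \<and>
      (g1 has_real_derivative g2 t) (at t) \<and> (g2 has_real_derivative g3 t) (at t))"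

lemma C3_deriv:
  assumes "C3on g g1 g2 g3 U" "t \<in> U"
  shows "deriv g t = g1 t" "(deriv ^^ 2) g t = g2 t" "(deriv ^^ 3) g t = g3 t"
proof -
  have U: "open U" and d: "\<And>t. t \<in> U \<Longrightarrow> (g has_real_derivative g1 t) (at t) \<and>
      (g1 has_real_derivative g2 t) (at t) \<and> (g2 has_real_derivative g3 t) (at t)"
    using assms(1) unfolding C3on_def by auto
  have e1: "deriv g x = g1 x" if "x \<in> U" for x using d[OF that] by (simp add: DERIV_imp_deriv)
  have d2: "(deriv g has_real_derivative g2 x) (at x)" if "x \<in> U" for x
    by (rule has_field_derivative_transform_within_open[OF _ U that]) (use d[OF that] e1 in auto)
  have e2: "deriv (deriv g) x = g2 x" if "x \<in> U" for x using d2[OF that] by (simp add: DERIV_imp_deriv)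
  have d3: "(deriv (deriv g) has_real_derivative g3 x) (at x)" if "x \<in> U" for x
    by (rule has_field_derivative_transform_within_open[OF _ U that]) (use d[OF that] e2 in auto)
  show "deriv g t = g1 t" by (rule e1[OF assms(2)])
  show "(deriv ^^ 2) g t = g2 t" using e2[OF assms(2)] by (simp add: numeral_2_eq_2)
  show "(deriv ^^ 3) g t = g3 t" using d3[OF assms(2)] by (simp add: numeral_3_eq_3 DERIV_imp_deriv)
qed

lemma C3_mono: "C3on g g1 g2 g3 U \<Longrightarrow> open U' \<Longrightarrow> U' \<subseteq> U \<Longrightarrow> C3on g g1 g2 g3 U'"
  unfolding C3on_def by blast

lemma C3_comp:
  assumes h: "C3on h h1 h2 h3 U" and g: "C3on g g1 g2 g3 V" and hU: "h ` U \<subseteq> V"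
  shows "C3on (\<lambda>t. g (h t)) (\<lambda>t. g1 (h t) * h1 t) (\<lambda>t. g2 (h t) * h1 t ^ 2 + g1 (h t) * h2 t)
    (\<lambda>t. g3 (h t) * h1 t ^ 3 + 3 * g2 (h t) * h1 t * h2 t + g1 (h t) * h3 t) U"
  unfolding C3on_def
proof (intro conjI ballI)
  show "open U" using h by (simp add: C3on_def)
  fix t assume t: "t \<in> U"
  have hd: "(h has_real_derivative h1 t) (at t)" "(h1 has_real_derivative h2 t) (at t)" "(h2 has_real_derivative h3 t) (at t)"
    using h t unfolding C3on_def by auto
  have ht: "h t \<in> V" using hU t by auto
  have gd: "(g has_real_derivative g1 (h t)) (at (h t))" "(g1 has_real_derivative g2 (h t)) (at (h t))"
    "(g2 has_real_derivative g3 (h t)) (at (h t))"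
    using g ht unfolding C3on_def by auto
  show "((\<lambda>t. g (h t)) has_real_derivative g1 (h t) * h1 t) (at t)"
    by (rule DERIV_chain2[OF gd(1) hd(1)])
  have c1: "((\<lambda>t. g1 (h t)) has_real_derivative g2 (h t) * h1 t) (at t)" by (rule DERIV_chain2[OF gd(2) hd(1)])
  have c2: "((\<lambda>t. g2 (h t)) has_real_derivative g3 (h t) * h1 t) (at t)" by (rule DERIV_chain2[OF gd(3) hd(1)])
  show "((\<lambda>t. g1 (h t) * h1 t) has_real_derivative g2 (h t) * h1 t ^ 2 + g1 (h t) * h2 t) (at t)"
    by (rule DERIV_cong[OF DERIV_mult[OF c1 hd(2)]]) (simp add: power2_eq_square algebra_simps)
  have p2: "((\<lambda>t. h1 t ^ 2) has_real_derivative 2 * h1 t * h2 t) (at t)"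
    using DERIV_mult[OF hd(2) hd(2)] by (simp add: power2_eq_square algebra_simps)
  show "((\<lambda>t. g2 (h t) * h1 t ^ 2 + g1 (h t) * h2 t) has_real_derivative
     g3 (h t) * h1 t ^ 3 + 3 * g2 (h t) * h1 t * h2 t + g1 (h t) * h3 t) (at t)"
    by (rule DERIV_cong[OF DERIV_add[OF DERIV_mult[OF c2 p2] DERIV_mult[OF c1 hd(3)]]])
       (simp add: power2_eq_square power3_eq_cube algebra_simps)
qed

lemma sch_comp_alg:
  fixes g1 g2 g3 h1 h2 h3 :: real
  assumes "g1 \<noteq> 0" "h1 \<noteq> 0"
  shows "(g3 * h1 ^ 3 + 3 * g2 * h1 * h2 + g1 * h3) / (g1 * h1) - 3 / 2 * ((g2 * h1 ^ 2 + g1 * h2) / (g1 * h1)) ^ 2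
     = (g3 / g1 - 3 / 2 * (g2 / g1) ^ 2) * h1 ^ 2 + (h3 / h1 - 3 / 2 * (h2 / h1) ^ 2)"
  using assms by (simp add: field_simps power2_eq_square power3_eq_cube)

lemma schwarzian_C3:
  assumes "C3on g g1 g2 g3 U" "t \<in> U"
  shows "schwarzian g t = g3 t / g1 t - 3 / 2 * (g2 t / g1 t) ^ 2"
  using C3_deriv[OF assms] by (simp add: schwarzian_def)


lemma dtan:
  fixes k x :: real
  assumes k: "k \<noteq> 0" and c: "cos (x/k) \<noteq> 0"
  shows "((\<lambda>x. tan (x/k)) has_real_derivative (1 + tan (x/k)^2) / k) (at x)"
proof -
  have "((\<lambda>x. tan (x/k)) has_real_derivative inverse ((cos (x/k))^2) * (1/k)) (at x)"
    by (rule DERIV_chain2[OF DERIV_tan[OF c] DERIV_cdivide[OF DERIV_ident]])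
  moreover have "inverse ((cos (x/k))^2) = 1 + tan (x/k)^2" using tan_sec[OF c] by (simp add: power_inverse)
  ultimately show ?thesis by simp
qed

definition p1 :: "real \<Rightarrow> real \<Rightarrow> real" where "p1 k x = 1 + tan (x/k)^2"
definition p2 :: "real \<Rightarrow> real \<Rightarrow> real" where "p2 k x = 2 / k * tan (x/k) * (1 + tan (x/k)^2)"
definition p3 :: "real \<Rightarrow> real \<Rightarrow> real" where "p3 k x = 2 / k^2 * (1 + tan (x/k)^2) * (1 + 3 * tan (x/k)^2)"

definition chartset :: "real \<Rightarrow> real set" where "chartset k = {x. cos (x/k) \<noteq> 0}"

lemma open_chartset: "k \<noteq> 0 \<Longrightarrow> open (chartset k)"
  unfolding chartset_def by (rule open_Collect_neq) (auto intro!: continuous_intros)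

lemma p1_pos: "p1 k x > 0" unfolding p1_def by (simp add: add_pos_nonneg)

lemma dPh: "k \<noteq> 0 \<Longrightarrow> cos (x/k) \<noteq> 0 \<Longrightarrow> ((\<lambda>x. k * tan (x/k)) has_real_derivative p1 k x) (at x)"
  unfolding p1_def by (rule DERIV_cong[OF DERIV_cmult[OF dtan]]) auto

lemma dp1: "k \<noteq> 0 \<Longrightarrow> cos (x/k) \<noteq> 0 \<Longrightarrow> (p1 k has_real_derivative p2 k x) (at x)"
proof -
  assume k: "k \<noteq> 0" and c: "cos (x/k) \<noteq> 0"
  have "((\<lambda>x. 1 + tan (x/k) * tan (x/k)) has_real_derivative
      0 + ((1 + tan (x/k)^2) / k * tan (x/k) + (1 + tan (x/k)^2) / k * tan (x/k))) (at x)"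
    by (intro DERIV_add DERIV_const DERIV_mult dtan k c)
  moreover have "p1 k = (\<lambda>x. 1 + tan (x/k) * tan (x/k))" by (intro ext) (simp add: p1_def power2_eq_square)
  ultimately show ?thesis by (simp add: p2_def field_simps)
qed

lemma dp2: "k \<noteq> 0 \<Longrightarrow> cos (x/k) \<noteq> 0 \<Longrightarrow> (p2 k has_real_derivative p3 k x) (at x)"
proof -
  assume k: "k \<noteq> 0" and c: "cos (x/k) \<noteq> 0"
  have d: "((\<lambda>x. 2 / k * tan (x/k) * (1 + tan (x/k) * tan (x/k))) has_real_derivative
      2 / k * ((1 + tan (x/k)^2) / k) * (1 + tan (x/k) * tan (x/k)) +
      (0 + ((1 + tan (x/k)^2) / k * tan (x/k) + (1 + tan (x/k)^2) / k * tan (x/k))) * (2 / k * tan (x/k))) (at x)"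
    by (intro DERIV_add DERIV_const DERIV_mult DERIV_cmult dtan k c)
  have eqF: "p2 k = (\<lambda>x. 2 / k * tan (x/k) * (1 + tan (x/k) * tan (x/k)))"
    by (intro ext) (simp add: p2_def power2_eq_square)
  have eqX: "2 / k * ((1 + tan (x/k)^2) / k) * (1 + tan (x/k) * tan (x/k)) +
      (0 + ((1 + tan (x/k)^2) / k * tan (x/k) + (1 + tan (x/k)^2) / k * tan (x/k))) * (2 / k * tan (x/k)) = p3 k x"
    using k by (simp add: p3_def field_simps power2_eq_square)
  show ?thesis by (subst eqF, rule DERIV_cong[OF d eqX])
qed

lemma C3_Ph: assumes k: "k \<noteq> 0" shows "C3on (\<lambda>x. k * tan (x/k)) (p1 k) (p2 k) (p3 k) (chartset k)"
  unfolding C3on_def using open_chartset[OF k] dPh dp1 dp2 k by (auto simp: chartset_def)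

lemma sch_Ph: "k \<noteq> 0 \<Longrightarrow> p3 k x / p1 k x - 3 / 2 * (p2 k x / p1 k x)^2 = 2 / k^2"
proof -
  assume k: "k \<noteq> 0"
  define T where "T = tan (x/k)"
  have nz: "1 + T^2 \<noteq> 0" using p1_pos[of k x] by (simp add: p1_def T_def)
  have e1: "p1 k x = 1 + T^2" by (simp add: p1_def T_def)
  have e2: "p2 k x = 2 / k * T * (1 + T^2)" by (simp add: p2_def T_def)
  have e3: "p3 k x = 2 / k^2 * (1 + T^2) * (1 + 3 * T^2)" by (simp add: p3_def T_def)
  have a: "p3 k x / p1 k x = 2 / k^2 * (1 + 3 * T^2)" 
  proof -
    have "2 / k^2 * (1 + T^2) * (1 + 3 * T^2) = (2 / k^2 * (1 + 3 * T^2)) * (1 + T^2)" by (simp only: mult_ac)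
    then have "p3 k x / p1 k x = (2 / k^2 * (1 + 3 * T^2)) * (1 + T^2) / (1 + T^2)" by (simp only: e1 e3)
    also have "\<dots> = 2 / k^2 * (1 + 3 * T^2)" by (rule nonzero_mult_div_cancel_right[OF nz])
    finally show ?thesis .
  qed
  have b: "p2 k x / p1 k x = 2 / k * T" unfolding e1 e2 by (rule nonzero_mult_div_cancel_right[OF nz])
  have "2 / k^2 * (1 + 3 * T^2) - 3 / 2 * (2 / k * T)^2 = 2 / k^2"
    using k by (simp add: field_simps power2_eq_square)
  then show ?thesis using a b by simp
qed

definition q1 :: "real \<Rightarrow> real \<Rightarrow> real" where "q1 k t = k^2 / (k^2 + t^2)"
definition q2 :: "real \<Rightarrow> real \<Rightarrow> real" where "q2 k t = - 2 * k^2 * t / (k^2 + t^2)^2"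
definition q3 :: "real \<Rightarrow> real \<Rightarrow> real" where "q3 k t = 2 * k^2 * (3 * t^2 - k^2) / (k^2 + t^2)^3"

lemma C3_Ps: assumes k: "k \<noteq> 0" shows "C3on (\<lambda>t. k * arctan (t/k) + c) (q1 k) (q2 k) (q3 k) UNIV"
  unfolding C3on_def
proof (intro conjI ballI open_UNIV)
  fix t :: real
  have pos: "k^2 + t^2 > 0" using k by (simp add: add_pos_nonneg)
  have "((\<lambda>t. k * arctan (t/k) + c) has_real_derivative k * (inverse (1 + (t/k)^2) * (1/k)) + 0) (at t)"
    by (intro DERIV_add DERIV_const DERIV_cmult DERIV_chain2[OF DERIV_arctan DERIV_cdivide[OF DERIV_ident]])
  moreover have "k * (inverse (1 + (t/k)^2) * (1/k)) + 0 = q1 k t"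
  proof -
    have e: "1 + (t/k)^2 = (k^2+t^2)/k^2" using k by (simp add: power_divide field_simps)
    show ?thesis using k pos by (simp add: e q1_def)
  qed
  ultimately show "((\<lambda>t. k * arctan (t/k) + c) has_real_derivative q1 k t) (at t)" by simp
  have dd: "((\<lambda>t. k^2 + t * t) has_real_derivative 0 + (1 * t + 1 * t)) (at t)"
    by (intro DERIV_add DERIV_const DERIV_mult DERIV_ident)
  have "((\<lambda>t. k^2 / (k^2 + t * t)) has_real_derivative (0 * (k^2 + t * t) - k^2 * (0 + (1 * t + 1 * t))) / ((k^2 + t * t) * (k^2 + t * t))) (at t)"
    by (rule DERIV_divide[OF DERIV_const dd]) (use pos k in \<open>simp add: power2_eq_square\<close>)
  moreover have "q1 k = (\<lambda>t. k^2 / (k^2 + t * t))" by (intro ext) (simp add: q1_def power2_eq_square)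
  ultimately show "(q1 k has_real_derivative q2 k t) (at t)" using pos k by (simp add: q2_def field_simps power2_eq_square)
  have dd2: "((\<lambda>t. (k^2 + t * t) * (k^2 + t * t)) has_real_derivative
      (0 + (1 * t + 1 * t)) * (k^2 + t * t) + (0 + (1 * t + 1 * t)) * (k^2 + t * t)) (at t)"
    by (intro DERIV_mult dd)
  have dn: "((\<lambda>t. - 2 * k^2 * t) has_real_derivative - 2 * k^2 * 1) (at t)"
    by (intro DERIV_cmult DERIV_ident)
  have nz: "k^2 + t * t \<noteq> 0" using pos k by (simp add: power2_eq_square)
  have d: "((\<lambda>t. - 2 * k^2 * t / ((k^2 + t * t) * (k^2 + t * t))) has_real_derivative
     ((- 2 * k^2 * 1) * ((k^2 + t * t) * (k^2 + t * t)) - (- 2 * k^2 * t) * ((0 + (1 * t + 1 * t)) * (k^2 + t * t) + (0 + (1 * t + 1 * t)) * (k^2 + t * t)))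
      / (((k^2 + t * t) * (k^2 + t * t)) * ((k^2 + t * t) * (k^2 + t * t)))) (at t)"
    by (rule DERIV_divide[OF dn dd2]) (use nz in simp)
  have eqF: "q2 k = (\<lambda>t. - 2 * k^2 * t / ((k^2 + t * t) * (k^2 + t * t)))" by (intro ext) (simp add: q2_def power2_eq_square)
  have eqX: "((- 2 * k^2 * 1) * ((k^2 + t * t) * (k^2 + t * t)) - (- 2 * k^2 * t) * ((0 + (1 * t + 1 * t)) * (k^2 + t * t) + (0 + (1 * t + 1 * t)) * (k^2 + t * t)))
      / (((k^2 + t * t) * (k^2 + t * t)) * ((k^2 + t * t) * (k^2 + t * t))) = q3 k t"
  proof -
    define u where "u = k^2 + t * t"
    have u: "u \<noteq> 0" using nz by (simp add: u_def)
    have "((- 2 * k^2 * 1) * (u * u) - (- 2 * k^2 * t) * ((0 + (1 * t + 1 * t)) * u + (0 + (1 * t + 1 * t)) * u)) / ((u * u) * (u * u))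
       = 2 * k^2 * (4 * t * t - u) / (u * u * u)"
      using u by (simp add: field_simps)
    also have "\<dots> = q3 k t" by (simp add: q3_def u_def power2_eq_square power3_eq_cube algebra_simps)
    finally show ?thesis by (simp add: u_def)
  qed
  show "(q2 k has_real_derivative q3 k t) (at t)" by (subst eqF, rule DERIV_cong[OF d eqX])
qed


context flowctx begin

lemma dD1_0: "((\<lambda>s. D1 s \<theta>) has_real_derivative Fd 1 \<theta>) (at 0)"
  using dD1[of \<theta> 0] by (simp add: fl0)
lemma dD2_0: "((\<lambda>s. D2 s \<theta>) has_real_derivative Fd 2 \<theta>) (at 0)"
  using dD2[of \<theta> 0] by (simp add: fl0)
lemma dD3_0: "((\<lambda>s. D3 s \<theta>) has_real_derivative Fd 3 \<theta>) (at 0)"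
  using dD3[of \<theta> 0] by (simp add: fl0)

lemma part1_generic:
  fixes k c \<theta> t0 :: real
  assumes k: "k > 0" and chart: "cos (\<theta>/k) \<noteq> 0" and t0: "t0 = k * tan (\<theta>/k)"
    and Pt0: "k * arctan (t0/k) + c = \<theta>"
  shows "((\<lambda>s. schwarzian (\<lambda>t. k * tan (\<phi> s (k * arctan (t/k) + c) / k)) t0 * (p1 k \<theta>)^2)
     has_real_derivative Fd 3 \<theta> + 4 / k^2 * Fd 1 \<theta>) (at 0)"
proof -
  define P where "P t = k * arctan (t/k) + c" for t
  have kz: "k \<noteq> 0" using k by simp
  have C3P: "C3on P (q1 k) (q2 k) (q3 k) UNIV" unfolding P_def by (rule C3_Ps[OF kz])
  have C3phi: "C3on (\<phi> s) (D1 s) (D2 s) (D3 s) UNIV" for s unfolding C3on_def using flow_derivs by auto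
  have PT: "P t0 = \<theta>" using Pt0 by (simp add: P_def)
  have q1p1: "q1 k t0 * p1 k \<theta> = 1"
  proof -
    have nz: "1 + tan (\<theta>/k)^2 \<noteq> 0" using p1_pos[of k \<theta>] by (simp add: p1_def)
    have e: "q1 k t0 = k^2 / (k^2 * (1 + tan (\<theta>/k)^2))" by (simp add: q1_def t0 power_mult_distrib algebra_simps)
    have k2: "k^2 \<noteq> 0" using kz by simp
    show ?thesis unfolding e p1_def using nz k2 by (simp del: power2_eq_square)
  qed
  have q1nz: "q1 k t0 \<noteq> 0" using q1p1 by auto
  define K0 where "K0 = (q3 k t0 / q1 k t0 - 3/2 * (q2 k t0 / q1 k t0)^2) * (p1 k \<theta>)^2"
  define R where "R s = 2/k^2 * (D1 s \<theta>)^2 + (D3 s \<theta> / D1 s \<theta> - 3/2 * (D2 s \<theta> / D1 s \<theta>)^2) + K0" for s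
  have ev: "eventually (\<lambda>s. \<phi> s \<theta> \<in> chartset k) (nhds 0)"
  proof (rule topological_tendstoD[OF _ open_chartset[OF kz]])
    have "((\<lambda>s. \<phi> s \<theta>) \<longlongrightarrow> \<phi> 0 \<theta>) (at 0)" using DERIV_isCont[OF flD] by (simp add: isCont_def)
    then show "((\<lambda>s. \<phi> s \<theta>) \<longlongrightarrow> \<theta>) (nhds 0)"
      using tendsto_at_iff_tendsto_nhds_within[of "\<lambda>s. \<phi> s \<theta>" 0 \<theta> UNIV] by (simp add: fl0)
    show "\<theta> \<in> chartset k" using chart by (simp add: chartset_def)
  qed
  have eq: "schwarzian (\<lambda>t. k * tan (\<phi> s (P t) / k)) t0 * (p1 k \<theta>)^2 = R s"
    if cs: "\<phi> s \<theta> \<in> chartset k" for s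
  proof -
    have C3h: "C3on (\<lambda>t. \<phi> s (P t)) (\<lambda>t. D1 s (P t) * q1 k t) (\<lambda>t. D2 s (P t) * q1 k t ^ 2 + D1 s (P t) * q2 k t)
       (\<lambda>t. D3 s (P t) * q1 k t ^ 3 + 3 * D2 s (P t) * q1 k t * q2 k t + D1 s (P t) * q3 k t) UNIV"
      by (rule C3_comp[OF C3P C3phi]) auto
    have contH: "continuous_on UNIV (\<lambda>t. \<phi> s (P t))"
      by (rule deriv_cont_on) (use C3h in \<open>auto simp: C3on_def\<close>)
    define U where "U = (\<lambda>t. \<phi> s (P t)) -` chartset k"
    have oU: "open U" unfolding U_def by (rule open_vimage[OF open_chartset[OF kz] contH])
    have t0U: "t0 \<in> U" using cs PT by (simp add: U_def)
    have C3t: "C3on (\<lambda>t. k * tan (\<phi> s (P t) / k))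
      (\<lambda>t. p1 k (\<phi> s (P t)) * (D1 s (P t) * q1 k t))
      (\<lambda>t. p2 k (\<phi> s (P t)) * (D1 s (P t) * q1 k t) ^ 2 + p1 k (\<phi> s (P t)) * (D2 s (P t) * q1 k t ^ 2 + D1 s (P t) * q2 k t))
      (\<lambda>t. p3 k (\<phi> s (P t)) * (D1 s (P t) * q1 k t) ^ 3 + 3 * p2 k (\<phi> s (P t)) * (D1 s (P t) * q1 k t) * (D2 s (P t) * q1 k t ^ 2 + D1 s (P t) * q2 k t)
         + p1 k (\<phi> s (P t)) * (D3 s (P t) * q1 k t ^ 3 + 3 * D2 s (P t) * q1 k t * q2 k t + D1 s (P t) * q3 k t)) U"
      by (rule C3_comp[OF C3_mono[OF C3h oU subset_UNIV] C3_Ph[OF kz]]) (auto simp: U_def)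
    define y where "y = \<phi> s \<theta>"
    define H1 where "H1 = D1 s \<theta> * q1 k t0"
    define H2 where "H2 = D2 s \<theta> * q1 k t0 ^ 2 + D1 s \<theta> * q2 k t0"
    define H3 where "H3 = D3 s \<theta> * q1 k t0 ^ 3 + 3 * D2 s \<theta> * q1 k t0 * q2 k t0 + D1 s \<theta> * q3 k t0"
    have S0: "schwarzian (\<lambda>t. k * tan (\<phi> s (P t) / k)) t0 =
       (p3 k y * H1 ^ 3 + 3 * p2 k y * H1 * H2 + p1 k y * H3) / (p1 k y * H1)
        - 3 / 2 * ((p2 k y * H1 ^ 2 + p1 k y * H2) / (p1 k y * H1)) ^ 2"
      using schwarzian_C3[OF C3t t0U] PT by (simp add: y_def H1_def H2_def H3_def)
    have p1nz: "p1 k y \<noteq> 0" using p1_pos[of k y] by simp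
    have D1nz: "D1 s \<theta> \<noteq> 0" using D1_pos[of s \<theta>] by simp
    have H1nz: "H1 \<noteq> 0" using D1nz q1nz by (simp add: H1_def)
    have S1: "schwarzian (\<lambda>t. k * tan (\<phi> s (P t) / k)) t0 =
       (p3 k y / p1 k y - 3 / 2 * (p2 k y / p1 k y) ^ 2) * H1 ^ 2 + (H3 / H1 - 3 / 2 * (H2 / H1) ^ 2)"
      unfolding S0 by (rule sch_comp_alg[OF p1nz H1nz])
    have S2: "H3 / H1 - 3 / 2 * (H2 / H1) ^ 2 =
       (D3 s \<theta> / D1 s \<theta> - 3 / 2 * (D2 s \<theta> / D1 s \<theta>) ^ 2) * q1 k t0 ^ 2
        + (q3 k t0 / q1 k t0 - 3 / 2 * (q2 k t0 / q1 k t0) ^ 2)"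
      unfolding H1_def H2_def H3_def by (rule sch_comp_alg[OF D1nz q1nz])
    have "schwarzian (\<lambda>t. k * tan (\<phi> s (P t) / k)) t0 * (p1 k \<theta>)^2 =
       2 / k^2 * (D1 s \<theta>)^2 * (q1 k t0 * p1 k \<theta>)^2
       + (D3 s \<theta> / D1 s \<theta> - 3 / 2 * (D2 s \<theta> / D1 s \<theta>) ^ 2) * (q1 k t0 * p1 k \<theta>)^2 + K0"
      unfolding S1 unfolding S2 unfolding sch_Ph[OF kz] K0_def H1_def by (simp add: algebra_simps power_mult_distrib)
    also have "\<dots> = R s" unfolding q1p1 by (simp add: R_def)
    finally show ?thesis .
  qed
  have dR: "(R has_real_derivative Fd 3 \<theta> + 4 / k^2 * Fd 1 \<theta>) (at 0)"
  proof -
    have a: "((\<lambda>s. (D1 s \<theta>)^2) has_real_derivative 2 * Fd 1 \<theta>) (at 0)"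
      using DERIV_mult[OF dD1_0[of \<theta>] dD1_0[of \<theta>]] by (simp add: power2_eq_square)
    have b: "((\<lambda>s. D3 s \<theta> / D1 s \<theta>) has_real_derivative Fd 3 \<theta>) (at 0)"
      using DERIV_divide[OF dD3_0[of \<theta>] dD1_0[of \<theta>]] by simp
    have c: "((\<lambda>s. D2 s \<theta> / D1 s \<theta>) has_real_derivative Fd 2 \<theta>) (at 0)"
      using DERIV_divide[OF dD2_0[of \<theta>] dD1_0[of \<theta>]] by simp
    have c2: "((\<lambda>s. (D2 s \<theta> / D1 s \<theta>)^2) has_real_derivative 0) (at 0)"
      using DERIV_mult[OF c c] by (simp add: power2_eq_square)
    have "(R has_real_derivative 2/k^2 * (2 * Fd 1 \<theta>) + (Fd 3 \<theta> - 3/2 * 0) + 0) (at 0)"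
      unfolding R_def[abs_def] by (intro DERIV_add DERIV_cmult DERIV_diff a b c2 DERIV_const)
    then show ?thesis by (simp add: field_simps)
  qed
  have "((\<lambda>s. schwarzian (\<lambda>t. k * tan (\<phi> s (P t) / k)) t0 * (p1 k \<theta>)^2) has_real_derivative
     Fd 3 \<theta> + 4 / k^2 * Fd 1 \<theta>) (at 0)"
  proof (rule DERIV_cong_ev[THEN iffD1, OF refl _ refl dR])
    show "\<forall>\<^sub>F s in nhds 0. R s = schwarzian (\<lambda>t. k * tan (\<phi> s (P t) / k)) t0 * (p1 k \<theta>)^2"
      using ev by eventually_elim (simp add: eq)
  qed
  then show ?thesis by (simp add: P_def)
qed

end

fun kk :: "proj_circle \<Rightarrow> real" where
  "kk CircA = 2"
| "kk CircB = 1"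

lemma kk_pos: "kk S > 0" by (cases S) auto

lemma Phi_eq: "Phi S = (\<lambda>x. kk S * tan (x / kk S))" by (cases S) auto

lemma Psi_eq: "Psi S = (\<lambda>t. kk S * arctan (t / kk S))" by (cases S) auto

lemma chart_eq: "in_chart S x \<longleftrightarrow> cos (x / kk S) \<noteq> 0" by (cases S) auto

lemma period_pos: "period S > 0" by (cases S) auto

lemma off_diag_sub: "off_diag S \<subseteq> {p. fst p \<noteq> snd p}"
  unfolding off_diag_def by (auto dest: spec[of _ 0])

lemma periodic_nat:
  fixes g :: "real \<Rightarrow> real"
  assumes per: "\<And>x. g (x + p) = g x"
  shows "g (x + real n * p) = g x"
proof (induction n arbitrary: x)
  case 0 then show ?case by simp
next
  case (Suc n)
  have "g (x + real (Suc n) * p) = g ((x + real n * p) + p)" by (simp add: algebra_simps)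
  also have "\<dots> = g (x + real n * p)" by (rule per)
  also have "\<dots> = g x" by (rule Suc)
  finally show ?case .
qed

lemma periodic_int:
  fixes g :: "real \<Rightarrow> real"
  assumes per: "\<And>x. g (x + p) = g x"
  shows "g (x + real_of_int m * p) = g x"
proof (cases "m \<ge> 0")
  case True
  then obtain n where "m = int n" using nonneg_int_cases by blast
  then show ?thesis using periodic_nat[of g p, OF per] by simp
next
  case False
  then have "- m \<ge> 0" by simp
  then obtain n where "- m = int n" using nonneg_int_cases by blast
  then have n: "m = - int n" by simp
  have "g x = g ((x + real_of_int m * p) + real n * p)" by (simp add: n algebra_simps)
  also have "\<dots> = g (x + real_of_int m * p)" by (rule periodic_nat[of g p, OF per])
  finally show ?thesis by simp
qed

lemma periodic_bounded:
  fixes g :: "real \<Rightarrow> real"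
  assumes per: "\<And>x. g (x + p) = g x" and p: "p > 0" and c: "continuous_on UNIV g"
  shows "\<exists>M. \<forall>z. \<bar>g z\<bar> \<le> M"
proof -
  have "compact (g ` {0..p})" by (rule compact_continuous_image[OF continuous_on_subset[OF c subset_UNIV] compact_Icc])
  then obtain M where M: "\<forall>y\<in>g ` {0..p}. norm y \<le> M" using compact_imp_bounded bounded_iff by metis
  have "\<bar>g z\<bar> \<le> M" for z
  proof -
    define m where "m = \<lfloor>z / p\<rfloor>"
    define z' where "z' = z - real_of_int m * p"
    have "real_of_int m \<le> z / p" "z / p < real_of_int m + 1" unfolding m_def using floor_correct[of "z/p"] by auto
    then have "real_of_int m * p \<le> z" "z < (real_of_int m + 1) * p" using p by (simp_all add: field_simps)
    then have z': "z' \<in> {0..p}" by (auto simp: z'_def algebra_simps)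
    have "g z = g (z' + real_of_int m * p)" by (simp add: z'_def)
    also have "\<dots> = g z'" by (rule periodic_int[of g p, OF per])
    finally show ?thesis using M z' by auto
  qed
  then show ?thesis by blast
qed

lemma periodic_deriv:
  fixes g :: "real \<Rightarrow> real"
  assumes per: "\<And>x. g (x + p) = g x" and d: "\<And>x. g differentiable (at x)"
  shows "deriv g (x + p) = deriv g x"
proof -
  have "(g has_real_derivative deriv g (x + p)) (at (x + p))" using d by (simp add: DERIV_deriv_iff_real_differentiable)
  then have "((\<lambda>y. g (y + p)) has_real_derivative deriv g (x + p)) (at x)" by (simp add: DERIV_shift)
  then have "(g has_real_derivative deriv g (x + p)) (at x)" using per by simp
  then show ?thesis by (simp add: DERIV_imp_deriv)
qed

lemma smooth_bnd:
  assumes "smooth_vf S f"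
  shows "\<exists>M. \<forall>z. \<bar>(deriv ^^ n) f z\<bar> \<le> M"
proof -
  have sm: "\<And>n x. (deriv ^^ n) f differentiable (at x)" and per: "\<And>x. f (x + period S) = f x"
    using assms unfolding smooth_vf_def by auto
  have pern: "(deriv ^^ n) f (x + period S) = (deriv ^^ n) f x" for n x
  proof (induction n arbitrary: x)
    case 0 then show ?case using per by simp
  next
    case (Suc n)
    show ?case using periodic_deriv[of "(deriv ^^ n) f" "period S" x, OF Suc sm] by simp
  qed
  have c: "continuous_on UNIV ((deriv ^^ n) f)"
    by (rule deriv_cont_on[where g'="\<lambda>x. deriv ((deriv ^^ n) f) x"]) (use sm in \<open>simp add: DERIV_deriv_iff_real_differentiable\<close>)
  show ?thesis by (rule periodic_bounded[OF pern period_pos c])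
qed


lemma Fn_D:
  assumes "smooth_vf S f"
  shows "((deriv ^^ n) f has_real_derivative (deriv ^^ Suc n) f x) (at x)"
  using assms unfolding smooth_vf_def by (simp add: DERIV_deriv_iff_real_differentiable)

lemma lam_eq:
  assumes "cos (x / kk S) \<noteq> 0"
  shows "lam S x = p1 (kk S) x"
proof -
  have kz: "kk S \<noteq> 0" using kk_pos[of S] by simp
  show ?thesis unfolding lam_def Phi_eq by (rule DERIV_imp_deriv[OF dPh[OF kz assms]])
qed

lemma s_formula_val:
  assumes sm: "smooth_vf S f" and ch: "in_chart S \<theta>"
  shows "s_formula S f \<theta> = (deriv ^^ 3) f \<theta> + 4 / (kk S)^2 * (deriv ^^ 1) f \<theta>"
proof -
  define k where "k = kk S"
  define F where "F n = (deriv ^^ n) f" for n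
  have kz: "k \<noteq> 0" using kk_pos[of S] by (simp add: k_def)
  have dF: "(F n has_real_derivative F (Suc n) x) (at x)" for n x unfolding F_def by (rule Fn_D[OF sm])
  have F0: "F 0 = f" by (simp add: F_def)
  have F1: "deriv f = F 1" by (simp add: F_def)
  define V where "V = chartset k"
  have oV: "open V" unfolding V_def by (rule open_chartset[OF kz])
  have thV: "\<theta> \<in> V" using ch by (simp add: V_def chartset_def chart_eq k_def)
  have cV: "x \<in> V \<Longrightarrow> cos (x/k) \<noteq> 0" for x by (simp add: V_def chartset_def)
  have lamV: "x \<in> V \<Longrightarrow> lam S x = p1 k x" for x using lam_eq cV by (simp add: k_def)
  have dlamV: "x \<in> V \<Longrightarrow> deriv (lam S) x = p2 k x" for x
  proof -
    assume x: "x \<in> V"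
    have "(lam S has_real_derivative p2 k x) (at x)"
      by (rule has_field_derivative_transform_within_open[OF dp1[OF kz cV[OF x]] oV x]) (simp add: lamV)
    then show ?thesis by (rule DERIV_imp_deriv)
  qed
  define \<rho> where "\<rho> x = 2 / k * tan (x/k)" for x
  have d\<rho>: "x \<in> V \<Longrightarrow> (\<rho> has_real_derivative 2 / k^2 * p1 k x) (at x)" for x
    unfolding \<rho>_def[abs_def] by (rule DERIV_cong[OF DERIV_cmult[OF dtan[OF kz cV]]]) (auto simp: p1_def power2_eq_square)
  have p2e: "p2 k x = \<rho> x * p1 k x" for x by (simp add: p2_def p1_def \<rho>_def)
  have p1nz: "p1 k x \<noteq> 0" for x using p1_pos[of k x] by simp
  define \<delta> where "\<delta> x = F 1 x + F 0 x * \<rho> x" for x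
  have DivV: "x \<in> V \<Longrightarrow> Div S f x = \<delta> x" for x
  proof -
    assume x: "x \<in> V"
    have "Div S f x = (f x * (\<rho> x * p1 k x) + p1 k x * F 1 x) / p1 k x"
      unfolding Div_def using x by (simp add: lamV dlamV p2e F1)
    also have "\<dots> = \<delta> x" using p1nz[of x] by (simp add: \<delta>_def F0 field_simps)
    finally show ?thesis .
  qed
  define \<delta>1 where "\<delta>1 x = F 2 x + (F 1 x * \<rho> x + 2 / k^2 * p1 k x * F 0 x)" for x
  have d\<delta>: "x \<in> V \<Longrightarrow> (\<delta> has_real_derivative \<delta>1 x) (at x)" for x
    unfolding \<delta>_def[abs_def] \<delta>1_def
    by (rule DERIV_cong[OF DERIV_add[OF dF DERIV_mult[OF dF d\<rho>]]]) (simp_all add: numeral_2_eq_2)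
  have dDivV: "x \<in> V \<Longrightarrow> deriv (Div S f) x = \<delta>1 x" for x
  proof -
    assume x: "x \<in> V"
    have "(Div S f has_real_derivative \<delta>1 x) (at x)"
      by (rule has_field_derivative_transform_within_open[OF d\<delta>[OF x] oV x]) (simp add: DivV)
    then show ?thesis by (rule DERIV_imp_deriv)
  qed
  define \<delta>2 where "\<delta>2 = F 3 \<theta> + (F 2 \<theta> * \<rho> \<theta> + 2 / k^2 * p1 k \<theta> * F 1 \<theta>
      + (2 / k^2 * p2 k \<theta> * F 0 \<theta> + F 1 \<theta> * (2 / k^2 * p1 k \<theta>)))"
  have d\<delta>1: "(\<delta>1 has_real_derivative \<delta>2) (at \<theta>)"
  proof -
    have a: "(F 2 has_real_derivative F 3 \<theta>) (at \<theta>)" using dF[of 2 \<theta>] by (simp add: numeral_3_eq_3 numeral_2_eq_2)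
    have b: "(F 1 has_real_derivative F 2 \<theta>) (at \<theta>)" using dF[of 1 \<theta>] by (simp add: numeral_2_eq_2)
    have c: "(F 0 has_real_derivative F 1 \<theta>) (at \<theta>)" using dF[of 0 \<theta>] by simp
    have e: "((\<lambda>x. 2 / k^2 * p1 k x) has_real_derivative 2 / k^2 * p2 k \<theta>) (at \<theta>)"
      by (rule DERIV_cmult[OF dp1[OF kz cV[OF thV]]])
    show ?thesis unfolding \<delta>1_def[abs_def] \<delta>2_def
      by (rule DERIV_add[OF a DERIV_add[OF DERIV_mult[OF b d\<rho>[OF thV]] DERIV_mult[OF e c]]])
  qed
  have dq: "((\<lambda>x. \<delta>1 x / p1 k x) has_real_derivative (\<delta>2 * p1 k \<theta> - \<delta>1 \<theta> * p2 k \<theta>) / (p1 k \<theta> * p1 k \<theta>)) (at \<theta>)"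
    by (rule DERIV_divide[OF d\<delta>1 dp1[OF kz cV[OF thV]] p1nz])
  have "((\<lambda>x. deriv (Div S f) x / lam S x) has_real_derivative (\<delta>2 * p1 k \<theta> - \<delta>1 \<theta> * p2 k \<theta>) / (p1 k \<theta> * p1 k \<theta>)) (at \<theta>)"
    by (rule has_field_derivative_transform_within_open[OF dq oV thV]) (simp add: dDivV lamV)
  then have sf: "s_formula S f \<theta> = p1 k \<theta> * ((\<delta>2 * p1 k \<theta> - \<delta>1 \<theta> * p2 k \<theta>) / (p1 k \<theta> * p1 k \<theta>))"
    unfolding s_formula_def using lamV[OF thV] by (simp add: DERIV_imp_deriv)
  have alg: "\<And>P A B R. P \<noteq> 0 \<Longrightarrow> P * ((A * P - B * (R * P)) / (P * P)) = A - B * (R::real)"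
    by (simp add: field_simps)
  have s1: "s_formula S f \<theta> = \<delta>2 - \<delta>1 \<theta> * \<rho> \<theta>" unfolding sf p2e by (rule alg[OF p1nz])
  have s2: "\<delta>2 - \<delta>1 \<theta> * \<rho> \<theta> = F 3 \<theta> + F 1 \<theta> * (2 * (2 / k^2) * p1 k \<theta> - \<rho> \<theta> ^ 2)"
    unfolding \<delta>2_def \<delta>1_def p2e by (simp add: algebra_simps power2_eq_square)
  have s3: "2 * (2 / k^2) * p1 k \<theta> - \<rho> \<theta> ^ 2 = 4 / k^2"
    using kz by (simp add: p1_def \<rho>_def field_simps power2_eq_square)
  have "s_formula S f \<theta> = F 3 \<theta> + 4 / k^2 * F 1 \<theta>" unfolding s1 s2 s3 by simp
  then show ?thesis by (simp add: F_def k_def)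
qed


lemma sin_nz: "0 < \<bar>u\<bar> \<Longrightarrow> \<bar>u\<bar> < pi \<Longrightarrow> sin u \<noteq> 0"
proof -
  assume a: "0 < \<bar>u\<bar>" "\<bar>u\<bar> < pi"
  show ?thesis
  proof (cases "u > 0")
    case True then show ?thesis using sin_gt_zero[of u] a by auto
  next
    case False
    then have "0 < - u" "- u < pi" using a by auto
    then have "sin (- u) > 0" by (rule sin_gt_zero)
    then show ?thesis by simp
  qed
qed

lemma tan_sub:
  assumes "cos x \<noteq> 0" "cos y \<noteq> 0"
  shows "tan x - tan y = sin (x - y) / (cos x * cos y)"
  using assms by (simp add: tan_def sin_diff field_simps)

lemma G1_eq:
  assumes cx: "cos (x / kk S) \<noteq> 0" and cy: "cos (y / kk S) \<noteq> 0" and s: "sin ((x - y) / kk S) \<noteq> 0"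
  shows "G1 S x y = Gam (kk S) (x - y)"
proof -
  define k where "k = kk S"
  have kz: "k \<noteq> 0" using kk_pos[of S] by (simp add: k_def)
  have cx': "cos (x/k) \<noteq> 0" and cy': "cos (y/k) \<noteq> 0" and s': "sin (x/k - y/k) \<noteq> 0"
    using cx cy s by (simp_all add: k_def diff_divide_distrib)
  have l1: "lam S x = inverse (cos (x/k)) ^ 2" using lam_eq[OF cx] tan_sec[OF cx'] by (simp add: p1_def k_def)
  have l2: "lam S y = inverse (cos (y/k)) ^ 2" using lam_eq[OF cy] tan_sec[OF cy'] by (simp add: p1_def k_def)
  have ph: "Phi S x - Phi S y = k * (sin (x/k - y/k) / (cos (x/k) * cos (y/k)))"
    unfolding Phi_eq k_def[symmetric] using tan_sub[OF cx' cy'] by (simp add: right_diff_distrib[symmetric])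
  have "G1 S x y = 4 * inverse (cos (x/k)) ^ 2 * inverse (cos (y/k)) ^ 2 / (k * (sin (x/k - y/k) / (cos (x/k) * cos (y/k))))^2"
    unfolding G1_def l1 l2 ph by simp
  also have "\<dots> = 4 / (k^2 * sin (x/k - y/k)^2)"
    using cx' cy' s' kz by (simp add: field_simps power2_eq_square)
  also have "\<dots> = Gam k (x - y)" by (simp add: Gam_def diff_divide_distrib)
  finally show ?thesis by (simp add: k_def)
qed

lemma LG1_eq:
  assumes ca: "cos (a / kk S) \<noteq> 0" and cb: "cos (b / kk S) \<noteq> 0" and ab: "a \<noteq> b" and abk: "\<bar>a - b\<bar> < kk S * pi"
  shows "LG1 S f (a, b) = (f a - f b) * Gam1 (kk S) (a - b) + Gam (kk S) (a - b) * (deriv f a + deriv f b)"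
proof -
  define k where "k = kk S"
  have kp: "k > 0" using kk_pos[of S] by (simp add: k_def)
  have kz: "k \<noteq> 0" using kp by simp
  have snz: "sin ((x - y) / k) \<noteq> 0" if "x \<noteq> y" "\<bar>x - y\<bar> < k * pi" for x y
  proof (rule sin_nz)
    show "0 < \<bar>(x - y) / k\<bar>" using that kp by simp
    show "\<bar>(x - y) / k\<bar> < pi" using that kp by (simp add: abs_divide divide_less_eq mult.commute)
  qed
  have sab: "sin ((a - b) / k) \<noteq> 0" using snz ab abk by (simp add: k_def)
  define W1 where "W1 = {x. cos (x / k) \<noteq> 0} \<inter> {x. sin ((x - b) / k) \<noteq> 0}"
  have oW1: "open W1" unfolding W1_def using kz
    by (intro open_Int open_Collect_neq) (auto intro!: continuous_intros)
  have aW1: "a \<in> W1" using ca sab by (simp add: W1_def k_def)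
  have dg1: "((\<lambda>x. Gam k (x - b)) has_real_derivative Gam1 k (a - b)) (at a)"
    using DERIV_chain2[OF Gam_deriv[OF kz sab] DERIV_diff[OF DERIV_ident DERIV_const]] by simp
  have "((\<lambda>x. G1 S x b) has_real_derivative Gam1 k (a - b)) (at a)"
    by (rule has_field_derivative_transform_within_open[OF dg1 oW1 aW1])
       (use cb in \<open>auto simp: W1_def k_def intro!: G1_eq[symmetric]\<close>)
  then have D1: "deriv (\<lambda>x. G1 S x b) a = Gam1 k (a - b)" by (rule DERIV_imp_deriv)
  define W2 where "W2 = {y. cos (y / k) \<noteq> 0} \<inter> {y. sin ((a - y) / k) \<noteq> 0}"
  have oW2: "open W2" unfolding W2_def using kz
    by (intro open_Int open_Collect_neq) (auto intro!: continuous_intros)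
  have bW2: "b \<in> W2" using cb sab by (simp add: W2_def k_def)
  have dg2: "((\<lambda>y. Gam k (a - y)) has_real_derivative - Gam1 k (a - b)) (at b)"
    using DERIV_chain2[OF Gam_deriv[OF kz sab] DERIV_diff[OF DERIV_const DERIV_ident]] by simp
  have "((\<lambda>y. G1 S a y) has_real_derivative - Gam1 k (a - b)) (at b)"
    by (rule has_field_derivative_transform_within_open[OF dg2 oW2 bW2])
       (use ca in \<open>auto simp: W2_def k_def intro!: G1_eq[symmetric]\<close>)
  then have D2: "deriv (\<lambda>y. G1 S a y) b = - Gam1 k (a - b)" by (rule DERIV_imp_deriv)
  have G: "G1 S a b = Gam k (a - b)" using G1_eq[OF ca cb] sab by (simp add: k_def)
  show ?thesis unfolding LG1_def using D1 D2 G by (simp add: k_def algebra_simps)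
qed

lemma LG1_lim:
  assumes sm: "smooth_vf S f" and ch: "in_chart S \<theta>"
  shows "(LG1 S f \<longlongrightarrow> 2/3 * (deriv ^^ 3) f \<theta> + 8 / (3 * (kk S)^2) * (deriv ^^ 1) f \<theta>)
     (at (\<theta>, \<theta>) within off_diag S)"
proof -
  define k where "k = kk S"
  have kp: "k > 0" using kk_pos[of S] by (simp add: k_def)
  have kz: "k \<noteq> 0" using kp by simp
  define Fd where "Fd n = (deriv ^^ n) f" for n
  have dF: "(Fd n has_real_derivative Fd (Suc n) x) (at x)" for n x unfolding Fd_def by (rule Fn_D[OF sm])
  define Fl where "Fl = at (\<theta>, \<theta>) within off_diag S"
  have lim0: "((\<lambda>p. (Fd 0 (fst p) - Fd 0 (snd p)) * Gam1 k (fst p - snd p)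
      + Gam k (fst p - snd p) * (Fd 1 (fst p) + Fd 1 (snd p)))
     \<longlongrightarrow> 2/3 * Fd 3 \<theta> + 8 / (3 * k^2) * Fd 1 \<theta>) Fl"
    unfolding Fl_def by (rule tendsto_within_subset[OF part2_lim[of Fd k \<theta>, OF dF kp] off_diag_sub])
  have oV: "open (chartset k)" by (rule open_chartset[OF kz])
  have thV: "\<theta> \<in> chartset k" using ch by (simp add: chartset_def chart_eq k_def)
  have fstT: "((\<lambda>p. fst p) \<longlongrightarrow> \<theta>) Fl"
    unfolding Fl_def using tendsto_fst[OF tendsto_ident_at[of "(\<theta>,\<theta>)"]] by simp
  have sndT: "((\<lambda>p. snd p) \<longlongrightarrow> \<theta>) Fl"
    unfolding Fl_def using tendsto_snd[OF tendsto_ident_at[of "(\<theta>,\<theta>)"]] by simp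
  have zT: "((\<lambda>p. fst p - snd p) \<longlongrightarrow> 0) Fl" using tendsto_diff[OF fstT sndT] by simp
  have e1: "\<forall>\<^sub>F p in Fl. fst p \<in> chartset k" by (rule topological_tendstoD[OF fstT oV thV])
  have e2: "\<forall>\<^sub>F p in Fl. snd p \<in> chartset k" by (rule topological_tendstoD[OF sndT oV thV])
  have e3: "\<forall>\<^sub>F p in Fl. fst p \<noteq> snd p"
    unfolding Fl_def eventually_at_filter using off_diag_sub by (auto intro: always_eventually)
  have kpi: "k * pi > 0" using kp by simp
  have e4: "\<forall>\<^sub>F p in Fl. dist (fst p - snd p) 0 < k * pi" by (rule tendstoD[OF zT kpi])
  have ev: "\<forall>\<^sub>F p in Fl. (Fd 0 (fst p) - Fd 0 (snd p)) * Gam1 k (fst p - snd p)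
      + Gam k (fst p - snd p) * (Fd 1 (fst p) + Fd 1 (snd p)) = LG1 S f p"
    using e1 e2 e3 e4
  proof eventually_elim
    case (elim p)
    obtain a b where p: "p = (a, b)" by fastforce
    have "LG1 S f (a, b) = (f a - f b) * Gam1 (kk S) (a - b) + Gam (kk S) (a - b) * (deriv f a + deriv f b)"
      by (rule LG1_eq) (use elim in \<open>simp_all add: p chartset_def k_def dist_real_def\<close>)
    then show ?case by (simp add: p Fd_def k_def)
  qed
  have "(LG1 S f \<longlongrightarrow> 2/3 * Fd 3 \<theta> + 8 / (3 * k^2) * Fd 1 \<theta>) Fl"
    by (rule Lim_transform_eventually[OF lim0 ev])
  then show ?thesis by (simp add: Fl_def Fd_def k_def)
qed


theorem mainTheorem12:
  fixes S :: proj_circle and f :: "real \<Rightarrow> real" and \<phi> :: "real \<Rightarrow> real \<Rightarrow> real"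
    and \<theta> :: real
  assumes "smooth_vf S f"
    and "is_flow f \<phi>"
    and "in_chart S \<theta>"
  shows "((\<lambda>s. Sch_coef S (\<phi> s) \<theta>) has_real_derivative s_formula S f \<theta>) (at 0)
     \<and> (\<exists>L. (LG1 S f \<longlongrightarrow> L) (at (\<theta>, \<theta>) within off_diag S)
            \<and> s_formula S f \<theta> = 3 / 2 * L)"
proof -
  have sm: "smooth_vf S f" and fl: "is_flow f \<phi>" and ch: "in_chart S \<theta>" using assms by auto
  interpret F: flowctx f \<phi>
  proof
    show "(deriv ^^ n) f differentiable (at x)" for n x using sm unfolding smooth_vf_def by auto
    show "\<exists>M. \<forall>z. \<bar>(deriv ^^ n) f z\<bar> \<le> M" for n by (rule smooth_bnd[OF sm])
    show "\<phi> 0 y = y" for y using fl unfolding is_flow_def by auto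
    show "((\<lambda>r. \<phi> r y) has_real_derivative f (\<phi> r y)) (at r)" for r y using fl unfolding is_flow_def by auto
  qed
  define k where "k = kk S"
  have kp: "k > 0" using kk_pos[of S] by (simp add: k_def)
  have chart: "cos (\<theta> / k) \<noteq> 0" using ch by (simp add: chart_eq k_def)
  define t0 where "t0 = Phi S \<theta>"
  define c where "c = \<theta> - Psi S (Phi S \<theta>)"
  have t0e: "t0 = k * tan (\<theta> / k)" by (simp add: t0_def Phi_eq k_def)
  have Pt0: "k * arctan (t0 / k) + c = \<theta>" by (simp add: c_def t0_def Psi_eq k_def)
  have P1: "((\<lambda>s. schwarzian (\<lambda>t. k * tan (\<phi> s (k * arctan (t/k) + c) / k)) t0 * (p1 k \<theta>)^2)
     has_real_derivative F.Fd 3 \<theta> + 4 / k^2 * F.Fd 1 \<theta>) (at 0)"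
    by (rule F.part1_generic[OF kp chart t0e Pt0])
  have tm: "tilde_map S (\<phi> s) \<theta> = (\<lambda>t. k * tan (\<phi> s (k * arctan (t/k) + c) / k))" for s
    by (rule ext) (simp add: tilde_map_def Psi_at_def c_def Phi_eq Psi_eq k_def)
  have SC: "Sch_coef S (\<phi> s) \<theta> = schwarzian (\<lambda>t. k * tan (\<phi> s (k * arctan (t/k) + c) / k)) t0 * (p1 k \<theta>)^2" for s
    unfolding Sch_coef_def tm using lam_eq[of \<theta> S] chart by (simp add: t0_def k_def)
  have sf: "s_formula S f \<theta> = (deriv ^^ 3) f \<theta> + 4 / k^2 * (deriv ^^ 1) f \<theta>"
    using s_formula_val[OF sm ch] by (simp add: k_def)
  have part1: "((\<lambda>s. Sch_coef S (\<phi> s) \<theta>) has_real_derivative s_formula S f \<theta>) (at 0)"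
    using P1 unfolding SC[symmetric] sf by (simp add: F.Fd_def)
  have lim: "(LG1 S f \<longlongrightarrow> 2/3 * (deriv ^^ 3) f \<theta> + 8 / (3 * k^2) * (deriv ^^ 1) f \<theta>) (at (\<theta>, \<theta>) within off_diag S)"
    using LG1_lim[OF sm ch] by (simp add: k_def)
  have "s_formula S f \<theta> = 3 / 2 * (2/3 * (deriv ^^ 3) f \<theta> + 8 / (3 * k^2) * (deriv ^^ 1) f \<theta>)"
    unfolding sf by (simp add: field_simps)
  then show ?thesis using part1 lim by blast
qed


end
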